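(* Let $s>\frac{7}{2}+p$ and, for $u\in H^s(\mathbb{R})$, let $A(u)=(a+b)u\partial_x+b\,\Gamma^{-(p+2)}[L\partial_x^2,u]\partial_x$ and $B(u)=\Gamma A(u)\Gamma^{-1}-A(u)$. Then for every $u\in H^s(\mathbb{R})$, $B(u)$ is a bounded linear operator on $H^{s-1}(\mathbb{R})$, the map $B:H^s(\mathbb{R})\to\mathcal{L}(H^{s-1}(\mathbb{R}))$ is uniformly bounded on bounded subsets of $H^s(\mathbb{R})$, and for every $r>0$ there is a constant $\lambda_2$, depending only on $r$, such that $$\|(B(u)-B(v))w\|_{s-1}\le\lambda_2\|u-v\|_s\|w\|_{s-1}$$ for all $u,v\in H^s(\mathbb{R})$ with $\|u\|_s,\|v\|_s\le r$ and all $w\in H^{s-1}(\mathbb{R})$.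
   Context: $a,b>0$ are constants. $L$ is a positive linear differential operator in $x$ (commuting with $\partial_x$) of even order $p\ge0$, so that $1-L\partial_x^2$ is a positive operator of order $p+2$; $\Gamma^\sigma=(1-L\partial_x^2)^{\sigma/(p+2)}$ for real $\sigma$ and $\Gamma=\Gamma^1$, which is an isometric isomorphism $H^s\to H^{s-1}$. $H^s=H^s(\mathbb{R})$ has norm $\|u\|_s=\|\Gamma^s u\|_{L^2}$. $[P,u]w=P(uw)-uPw$ denotes the commutator with multiplication by $u$. $\mathcal{L}(X)$ denotes bounded linear operators on $X$. *)

theory Defs
  imports "HOL-Analysis.Analysis"
begin

text \<open>Everything is formulated on the Fourier side, with the unitary convention
  hat f(xi) = (2 pi)^(-1/2) int e^(-i x xi) f(x) dx.  A (real-valued) function u is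
  represented by its Fourier transform U :: real => complex, which is Hermitian
  symmetric.  Under this convention d/dx is multiplication by i xi and the product
  u w corresponds to (2 pi)^(-1/2) times the convolution of U and W.\<close>

text \<open>The constant-coefficient differential operator L = sum_{k<=p} c k d^k has symbol
  Lsym c p xi = sum_{k<=p} c k (i xi)^k.\<close>
definition Lsym :: "(nat \<Rightarrow> real) \<Rightarrow> nat \<Rightarrow> real \<Rightarrow> complex" where
  "Lsym c p \<xi> = (\<Sum>k\<le>p. complex_of_real (c k) * (\<i> * complex_of_real \<xi>) ^ k)"

text \<open>Symbol of Gamma = (1 - L d^2)^(1/(p+2)).\<close>
definition msym :: "(nat \<Rightarrow> real) \<Rightarrow> nat \<Rightarrow> real \<Rightarrow> real" where
  "msym c p \<xi> = (1 + Re (Lsym c p \<xi>) * \<xi>\<^sup>2) powr (1 / real (p + 2))"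

definition GammaPow :: "(nat \<Rightarrow> real) \<Rightarrow> nat \<Rightarrow> real \<Rightarrow> (real \<Rightarrow> complex) \<Rightarrow> real \<Rightarrow> complex" where
  "GammaPow c p \<sigma> W = (\<lambda>\<xi>. complex_of_real (msym c p \<xi> powr \<sigma>) * W \<xi>)"

definition Dx :: "(real \<Rightarrow> complex) \<Rightarrow> real \<Rightarrow> complex" where
  "Dx W = (\<lambda>\<xi>. \<i> * complex_of_real \<xi> * W \<xi>)"

definition Lop :: "(nat \<Rightarrow> real) \<Rightarrow> nat \<Rightarrow> (real \<Rightarrow> complex) \<Rightarrow> real \<Rightarrow> complex" where
  "Lop c p W = (\<lambda>\<xi>. Lsym c p \<xi> * W \<xi>)"

definition Mult :: "(real \<Rightarrow> complex) \<Rightarrow> (real \<Rightarrow> complex) \<Rightarrow> real \<Rightarrow> complex" where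
  "Mult U W = (\<lambda>\<xi>. complex_of_real (1 / sqrt (2 * pi)) * (LINT \<eta>|lborel. U (\<xi> - \<eta>) * W \<eta>))"

definition Aop :: "real \<Rightarrow> real \<Rightarrow> (nat \<Rightarrow> real) \<Rightarrow> nat \<Rightarrow> (real \<Rightarrow> complex) \<Rightarrow> (real \<Rightarrow> complex) \<Rightarrow> real \<Rightarrow> complex" where
  "Aop a b c p U W = (\<lambda>\<xi>. complex_of_real (a + b) * Mult U (Dx W) \<xi>
      + complex_of_real b * GammaPow c p (- real (p + 2))
          (\<lambda>\<zeta>. Lop c p (Dx (Dx (Mult U (Dx W)))) \<zeta> - Mult U (Lop c p (Dx (Dx (Dx W)))) \<zeta>) \<xi>)"

definition Bop :: "real \<Rightarrow> real \<Rightarrow> (nat \<Rightarrow> real) \<Rightarrow> nat \<Rightarrow> (real \<Rightarrow> complex) \<Rightarrow> (real \<Rightarrow> complex) \<Rightarrow> real \<Rightarrow> complex" where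
  "Bop a b c p U W = (\<lambda>\<xi>. GammaPow c p 1 (Aop a b c p U (GammaPow c p (-1) W)) \<xi> - Aop a b c p U W \<xi>)"

definition Hs :: "(nat \<Rightarrow> real) \<Rightarrow> nat \<Rightarrow> real \<Rightarrow> (real \<Rightarrow> complex) set" where
  "Hs c p \<sigma> = {U. U \<in> borel_measurable lborel
      \<and> integrable lborel (\<lambda>\<xi>. (msym c p \<xi> powr \<sigma> * cmod (U \<xi>))\<^sup>2)
      \<and> (\<forall>\<xi>. U (- \<xi>) = cnj (U \<xi>))}"

definition hnorm :: "(nat \<Rightarrow> real) \<Rightarrow> nat \<Rightarrow> real \<Rightarrow> (real \<Rightarrow> complex) \<Rightarrow> real" where
  "hnorm c p \<sigma> U = sqrt (LINT \<xi>|lborel. (msym c p \<xi> powr \<sigma> * cmod (U \<xi>))\<^sup>2)"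

end

theory Submission
  imports Defs "HOL-Analysis.Analysis"
begin


lemma sum_split_top: fixes f :: "nat \<Rightarrow> real" shows "(\<Sum>k\<le>p. f k) = (\<Sum>k<p. f k) + (f p :: real)"
  using sum.lessThan_Suc[of f p] by (simp add: lessThan_Suc_atMost)

lemma poly_lower:
  fixes q :: "nat \<Rightarrow> real"
  assumes ev: "even p" and qp: "q p \<noteq> 0" and nn: "\<And>x. 0 \<le> (\<Sum>k\<le>p. q k * x ^ k)"
  shows "\<exists>\<delta>>0. \<exists>R\<ge>1. \<forall>x. R \<le> \<bar>x\<bar> \<longrightarrow> \<delta> * \<bar>x\<bar> ^ p \<le> (\<Sum>k\<le>p. q k * x ^ k)"
proof -
  define D where "D = (\<Sum>k<p. \<bar>q k\<bar>)"
  have D0: "D \<ge> 0" unfolding D_def by (simp add: sum_nonneg)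
  have T: "\<bar>\<Sum>k<p. q k * x ^ k\<bar> * \<bar>x\<bar> \<le> D * \<bar>x\<bar> ^ p" if x: "1 \<le> \<bar>x\<bar>" for x
  proof -
    have "\<bar>\<Sum>k<p. q k * x ^ k\<bar> * \<bar>x\<bar> \<le> (\<Sum>k<p. \<bar>q k\<bar> * \<bar>x\<bar> ^ k) * \<bar>x\<bar>"
      by (intro mult_right_mono order.trans[OF sum_abs]) (auto simp: abs_mult power_abs)
    also have "\<dots> = (\<Sum>k<p. \<bar>q k\<bar> * \<bar>x\<bar> ^ Suc k)"
      by (simp add: sum_distrib_left sum_distrib_right ac_simps)
    also have "\<dots> \<le> (\<Sum>k<p. \<bar>q k\<bar> * \<bar>x\<bar> ^ p)"
      by (intro sum_mono mult_left_mono power_increasing) (use x in auto)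
    also have "\<dots> = D * \<bar>x\<bar> ^ p" by (simp add: D_def sum_distrib_right)
    finally show ?thesis .
  qed
  have xp: "x ^ p = \<bar>x\<bar> ^ p" for x :: real using ev by (simp add: power_even_abs)
  have pos: "q p > 0"
  proof (rule ccontr)
    assume "\<not> q p > 0"
    with qp have neg: "q p < 0" by auto
    define x where "x = 1 + D / (- q p)"
    have Dq: "D / (- q p) \<ge> 0" using D0 neg by (intro divide_nonneg_pos) auto
    have x1: "1 \<le> \<bar>x\<bar>" using Dq by (simp add: x_def)
    have xe: "- q p * x = - q p + D" using neg by (simp add: x_def field_simps)
    have xgt: "D < - q p * \<bar>x\<bar>" proof -
      have "x > 0" using Dq by (simp add: x_def)
      then show ?thesis using xe neg by simp
    qed
    have "(\<Sum>k\<le>p. q k * x ^ k) * \<bar>x\<bar> = (\<Sum>k<p. q k * x ^ k) * \<bar>x\<bar> + q p * \<bar>x\<bar> ^ p * \<bar>x\<bar>"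
      by (simp add: sum_split_top xp[of x] algebra_simps)
    also have "\<dots> \<le> D * \<bar>x\<bar> ^ p + q p * \<bar>x\<bar> ^ p * \<bar>x\<bar>"
    proof -
      have "(\<Sum>k<p. q k * x ^ k) * \<bar>x\<bar> \<le> \<bar>\<Sum>k<p. q k * x ^ k\<bar> * \<bar>x\<bar>"
        by (intro mult_right_mono) auto
      then show ?thesis using T[OF x1] by linarith
    qed
    also have "\<dots> = \<bar>x\<bar> ^ p * (D + q p * \<bar>x\<bar>)" by (simp add: algebra_simps)
    also have "\<dots> < 0" using xgt x1 by (intro mult_pos_neg) auto
    finally have "(\<Sum>k\<le>p. q k * x ^ k) * \<bar>x\<bar> < 0" .
    moreover have "0 \<le> (\<Sum>k\<le>p. q k * x ^ k) * \<bar>x\<bar>" using nn[of x] by simp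
    ultimately show False by linarith
  qed
  define R where "R = max 1 (2 * D / q p)"
  have R1: "1 \<le> R" by (simp add: R_def)
  have main: "q p / 2 * \<bar>x\<bar> ^ p \<le> (\<Sum>k\<le>p. q k * x ^ k)" if xR: "R \<le> \<bar>x\<bar>" for x
  proof -
    have x1: "1 \<le> \<bar>x\<bar>" using xR by (simp add: R_def)
    have xD: "2 * D \<le> q p * \<bar>x\<bar>" using xR pos by (simp add: R_def field_simps)
    have "q p / 2 * \<bar>x\<bar> ^ p * \<bar>x\<bar> \<le> q p * \<bar>x\<bar> ^ p * \<bar>x\<bar> - D * \<bar>x\<bar> ^ p"
    proof -
      have "D * \<bar>x\<bar> ^ p \<le> (q p * \<bar>x\<bar> / 2) * \<bar>x\<bar> ^ p"
        using xD by (intro mult_right_mono) auto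
      then show ?thesis by (simp add: algebra_simps)
    qed
    also have "\<dots> \<le> q p * \<bar>x\<bar> ^ p * \<bar>x\<bar> + (\<Sum>k<p. q k * x ^ k) * \<bar>x\<bar>"
    proof -
      have "- (\<Sum>k<p. q k * x ^ k) * \<bar>x\<bar> \<le> \<bar>\<Sum>k<p. q k * x ^ k\<bar> * \<bar>x\<bar>"
        by (intro mult_right_mono) auto
      then show ?thesis using T[OF x1] by linarith
    qed
    also have "\<dots> = (\<Sum>k\<le>p. q k * x ^ k) * \<bar>x\<bar>" by (simp add: sum_split_top xp[of x] algebra_simps)
    finally have F: "q p / 2 * \<bar>x\<bar> ^ p * \<bar>x\<bar> \<le> (\<Sum>k\<le>p. q k * x ^ k) * \<bar>x\<bar>" .
    show "q p / 2 * \<bar>x\<bar> ^ p \<le> (\<Sum>k\<le>p. q k * x ^ k)" using mult_right_le_imp_le[OF F] x1 by simp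
  qed
  show ?thesis using main R1 pos by (intro exI[of _ "q p / 2"] conjI exI[of _ R]) auto
qed



locale setting =
  fixes c :: "nat \<Rightarrow> real" and p :: nat
  assumes ev: "even p" and cp: "c p \<noteq> 0"
    and Lr: "\<forall>\<xi>. Lsym c p \<xi> \<in> \<real> \<and> 0 \<le> Re (Lsym c p \<xi>)"
begin

definition ell :: "real \<Rightarrow> real" where "ell \<xi> = Re (Lsym c p \<xi>)"
definition PP :: "real \<Rightarrow> real" where "PP \<xi> = 1 + ell \<xi> * \<xi>\<^sup>2"
abbreviation m where "m \<equiv> msym c p"
abbreviation n where "n \<equiv> p + 2"

lemma ell_nonneg: "0 \<le> ell \<xi>" using Lr by (simp add: ell_def)
lemma Lsym_real: "Lsym c p \<xi> = complex_of_real (ell \<xi>)"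
  using Lr by (simp add: ell_def)
lemma PP_ge1: "1 \<le> PP \<xi>" using ell_nonneg[of \<xi>] by (simp add: PP_def)
lemma PP_pos: "0 < PP \<xi>" using PP_ge1[of \<xi>] by simp
lemma m_eq: "m \<xi> = PP \<xi> powr (1 / real n)" by (simp add: msym_def PP_def ell_def)
lemma m_ge1: "1 \<le> m \<xi>" using PP_ge1[of \<xi>] by (simp add: m_eq ge_one_powr_ge_zero)
lemma m_pos: "0 < m \<xi>" using m_ge1[of \<xi>] by simp
lemma m_pow: "m \<xi> ^ n = PP \<xi>"
proof -
  have "m \<xi> ^ n = m \<xi> powr real n" using m_pos[of \<xi>] by (rule powr_realpow[symmetric])
  also have "\<dots> = PP \<xi>" using PP_pos[of \<xi>] by (simp add: m_eq powr_powr)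
  finally show ?thesis .
qed
lemma m_powr_negn: "m \<xi> powr (- real n) = 1 / PP \<xi>"
proof -
  have e: "(1 / real n) * (- real n) = -1" by (simp add: field_simps)
  show ?thesis using PP_pos[of \<xi>] unfolding m_eq powr_powr e by (simp add: powr_neg_one)
qed

lemma Lsym_minus: "Lsym c p (- \<xi>) = cnj (Lsym c p \<xi>)"
  by (simp add: Lsym_def)
lemma ell_minus: "ell (- \<xi>) = ell \<xi>" by (simp add: ell_def Lsym_minus)
lemma PP_minus: "PP (- \<xi>) = PP \<xi>" by (simp add: PP_def ell_minus)
lemma m_minus: "m (- \<xi>) = m \<xi>" by (simp add: m_eq PP_minus)

lemma cont_Lsym: "continuous_on UNIV (Lsym c p)"
  unfolding Lsym_def by (intro continuous_intros)
lemma cont_PP: "continuous_on UNIV PP"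
  unfolding PP_def ell_def by (intro continuous_intros continuous_on_compose2[OF continuous_on_Re cont_Lsym]) auto
lemma cont_m: "continuous_on UNIV m"
proof -
  have "continuous_on UNIV (\<lambda>\<xi>. PP \<xi> powr (1 / real n))"
    using PP_pos by (intro continuous_intros cont_PP) (auto simp: less_imp_neq[symmetric])
  then show ?thesis by (simp add: m_eq[abs_def])
qed
lemma m_meas[measurable]: "m \<in> borel_measurable borel"
  using cont_m by (rule borel_measurable_continuous_onI)

definition qq :: "nat \<Rightarrow> real" where "qq k = c k * Re (\<i> ^ k)"
lemma ell_poly: "ell \<xi> = (\<Sum>k\<le>p. qq k * \<xi> ^ k)"
proof -
  have "(\<i> * complex_of_real \<xi>) ^ k = \<i> ^ k * complex_of_real (\<xi> ^ k)" for k
    by (simp add: power_mult_distrib)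
  then show ?thesis by (simp add: ell_def Lsym_def qq_def Re_sum mult.assoc)
qed

end


lemma pow_diff_bound:
  fixes x y :: real
  shows "\<bar>x ^ j - y ^ j\<bar> \<le> real j * \<bar>x - y\<bar> * max \<bar>x\<bar> \<bar>y\<bar> ^ (j - 1)"
proof -
  define M where "M = max \<bar>x\<bar> \<bar>y\<bar>"
  have S: "\<bar>\<Sum>i<j. y ^ (j - Suc i) * x ^ i\<bar> \<le> (\<Sum>i<j. M ^ (j - 1))"
  proof (rule order.trans[OF sum_abs], rule sum_mono)
    fix i assume i: "i \<in> {..<j}"
    have "\<bar>y ^ (j - Suc i) * x ^ i\<bar> = \<bar>y\<bar> ^ (j - Suc i) * \<bar>x\<bar> ^ i" by (simp add: abs_mult power_abs)
    also have "\<dots> \<le> M ^ (j - Suc i) * M ^ i"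
      by (intro mult_mono power_mono) (auto simp: M_def)
    also have "\<dots> = M ^ (j - 1)" using i by (simp add: power_add[symmetric])
    finally show "\<bar>y ^ (j - Suc i) * x ^ i\<bar> \<le> M ^ (j - 1)" .
  qed
  have "x ^ j - y ^ j = (x - y) * (\<Sum>i<j. y ^ (j - Suc i) * x ^ i)" by (rule power_diff_sumr2)
  then have "\<bar>x ^ j - y ^ j\<bar> = \<bar>x - y\<bar> * \<bar>\<Sum>i<j. y ^ (j - Suc i) * x ^ i\<bar>" by (simp add: abs_mult)
  also have "\<dots> \<le> \<bar>x - y\<bar> * (\<Sum>i<j. M ^ (j - 1))" by (intro mult_left_mono S) auto
  finally show ?thesis by (simp add: M_def ac_simps)
qed

lemma pow_diff_lower:
  fixes x y :: real
  assumes "0 \<le> y" "y \<le> x" "1 \<le> j"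
  shows "(x - y) * x ^ (j - 1) \<le> x ^ j - y ^ j"
proof -
  have "x ^ j - y ^ j = (x - y) * (\<Sum>i<j. y ^ (j - Suc i) * x ^ i)" by (rule power_diff_sumr2)
  moreover have "x ^ (j - 1) \<le> (\<Sum>i<j. y ^ (j - Suc i) * x ^ i)"
  proof -
    have "y ^ (j - Suc (j - 1)) * x ^ (j - 1) \<le> (\<Sum>i<j. y ^ (j - Suc i) * x ^ i)"
      by (rule member_le_sum) (use assms in auto)
    then show ?thesis using assms by simp
  qed
  ultimately show ?thesis using assms by (simp add: mult_left_mono)
qed

context setting begin

lemma qq_p: "qq p \<noteq> 0"
proof -
  have "\<i> ^ p = (\<i>\<^sup>2) ^ (p div 2)" using ev by (simp add: power_mult[symmetric])
  then have "\<i> ^ p = (-1) ^ (p div 2)" by simp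
  then have "Re (\<i> ^ p) = (-1) ^ (p div 2)" by simp
  then show ?thesis using cp by (simp add: qq_def)
qed

lemma lower: "\<exists>K>0. \<forall>\<xi>. \<bar>\<xi>\<bar> \<le> K * m \<xi>"
proof -
  obtain \<delta> R where d: "\<delta> > 0" and R: "R \<ge> 1" and b: "\<And>x. R \<le> \<bar>x\<bar> \<Longrightarrow> \<delta> * \<bar>x\<bar> ^ p \<le> ell x"
    using poly_lower[of p qq, OF ev qq_p] ell_nonneg unfolding ell_poly by blast
  define d' where "d' = \<delta> powr (1 / real n)"
  have d'0: "d' > 0" using d by (simp add: d'_def)
  define K where "K = max R (1 / d')"
  have K: "K > 0" using R by (simp add: K_def)
  have "\<bar>\<xi>\<bar> \<le> K * m \<xi>" for \<xi>
  proof (cases "R \<le> \<bar>\<xi>\<bar>")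
    case True
    have x0: "\<bar>\<xi>\<bar> > 0" using True R by simp
    have "\<delta> * \<bar>\<xi>\<bar> ^ n \<le> PP \<xi>"
    proof -
      have "\<delta> * \<bar>\<xi>\<bar> ^ n = (\<delta> * \<bar>\<xi>\<bar> ^ p) * \<xi>\<^sup>2" by (simp add: power_add power2_abs power2_eq_square)
      also have "\<dots> \<le> ell \<xi> * \<xi>\<^sup>2" by (intro mult_right_mono b True) auto
      finally show ?thesis by (simp add: PP_def)
    qed
    then have "(\<delta> * \<bar>\<xi>\<bar> ^ n) powr (1 / real n) \<le> m \<xi>"
      unfolding m_eq using d x0 by (intro powr_mono2) auto
    moreover have "(\<delta> * \<bar>\<xi>\<bar> ^ n) powr (1 / real n) = d' * \<bar>\<xi>\<bar>"
    proof -
      have "(\<bar>\<xi>\<bar> ^ n) powr (1 / real n) = \<bar>\<xi>\<bar>"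
      proof -
        have "\<bar>\<xi>\<bar> ^ n = \<bar>\<xi>\<bar> powr real n" by (rule powr_realpow[symmetric]) (rule x0)
        moreover have "(\<bar>\<xi>\<bar> powr real n) powr (1 / real n) = \<bar>\<xi>\<bar> powr (real n * (1 / real n))" by (rule powr_powr)
        moreover have "real n * (1 / real n) = 1" by simp
        ultimately show ?thesis by simp
      qed
      then show ?thesis using d by (simp add: powr_mult d'_def)
    qed
    ultimately have "d' * \<bar>\<xi>\<bar> \<le> m \<xi>" by simp
    then have "\<bar>\<xi>\<bar> \<le> (1 / d') * m \<xi>" using d'0 by (simp add: field_simps)
    also have "\<dots> \<le> K * m \<xi>" using m_pos[of \<xi>] by (intro mult_right_mono) (auto simp: K_def)
    finally show ?thesis .
  next
    case False
    then have "\<bar>\<xi>\<bar> \<le> R * 1" by simp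
    also have "\<dots> \<le> K * m \<xi>" using m_ge1[of \<xi>] R by (intro mult_mono) (auto simp: K_def)
    finally show ?thesis .
  qed
  then show ?thesis using K by blast
qed

lemma PP_poly: "PP \<xi> = 1 + (\<Sum>k\<le>p. qq k * \<xi> ^ (k + 2))"
  unfolding PP_def ell_poly sum_distrib_right by (intro arg_cong[where f="\<lambda>x. 1 + x"] sum.cong) (auto simp: power_add power2_eq_square)

lemma PP_diff: "\<bar>PP \<xi> - PP \<eta>\<bar> \<le> \<bar>\<xi> - \<eta>\<bar> * (\<Sum>k\<le>p. \<bar>qq k\<bar> * real (k + 2)) * (1 + max \<bar>\<xi>\<bar> \<bar>\<eta>\<bar>) ^ (p + 1)"
proof -
  define M where "M = max \<bar>\<xi>\<bar> \<bar>\<eta>\<bar>"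
  have M0: "0 \<le> M" by (simp add: M_def)
  have "PP \<xi> - PP \<eta> = (\<Sum>k\<le>p. qq k * (\<xi> ^ (k + 2) - \<eta> ^ (k + 2)))"
    by (simp add: PP_poly sum_subtractf[symmetric] algebra_simps)
  then have "\<bar>PP \<xi> - PP \<eta>\<bar> \<le> (\<Sum>k\<le>p. \<bar>qq k\<bar> * \<bar>\<xi> ^ (k + 2) - \<eta> ^ (k + 2)\<bar>)"
    by (simp add: order.trans[OF sum_abs] abs_mult)
  also have "\<dots> \<le> (\<Sum>k\<le>p. \<bar>qq k\<bar> * (real (k + 2) * \<bar>\<xi> - \<eta>\<bar> * (1 + M) ^ (p + 1)))"
  proof (intro sum_mono mult_left_mono)
    fix k assume k: "k \<in> {..p}"
    have "\<bar>\<xi> ^ (k + 2) - \<eta> ^ (k + 2)\<bar> \<le> real (k + 2) * \<bar>\<xi> - \<eta>\<bar> * M ^ (k + 2 - 1)"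
      using pow_diff_bound[of \<xi> "k + 2" \<eta>] by (simp add: M_def)
    also have "M ^ (k + 2 - 1) \<le> (1 + M) ^ (p + 1)"
    proof -
      have "M ^ (k + 2 - 1) \<le> (1 + M) ^ (k + 2 - 1)" using M0 by (intro power_mono) auto
      also have "\<dots> \<le> (1 + M) ^ (p + 1)" using k M0 by (intro power_increasing) auto
      finally show ?thesis .
    qed
    then have "real (k + 2) * \<bar>\<xi> - \<eta>\<bar> * M ^ (k + 2 - 1) \<le> real (k + 2) * \<bar>\<xi> - \<eta>\<bar> * (1 + M) ^ (p + 1)"
      by (intro mult_left_mono) auto
    finally show "\<bar>\<xi> ^ (k + 2) - \<eta> ^ (k + 2)\<bar> \<le> real (k + 2) * \<bar>\<xi> - \<eta>\<bar> * (1 + M) ^ (p + 1)" .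
  qed auto
  also have "\<dots> = \<bar>\<xi> - \<eta>\<bar> * (\<Sum>k\<le>p. \<bar>qq k\<bar> * real (k + 2)) * (1 + M) ^ (p + 1)"
    by (simp add: sum_distrib_left sum_distrib_right ac_simps)
  finally show ?thesis by (simp add: M_def)
qed

lemma lipschitz: "\<exists>L>0. \<forall>\<xi> \<eta>. \<bar>m \<xi> - m \<eta>\<bar> \<le> L * \<bar>\<xi> - \<eta>\<bar>"
proof -
  obtain K where K: "K > 0" and Kb: "\<And>\<xi>. \<bar>\<xi>\<bar> \<le> K * m \<xi>" using lower by blast
  define E where "E = (\<Sum>k\<le>p. \<bar>qq k\<bar> * real (k + 2))"
  have E0: "E \<ge> 0" unfolding E_def by (intro sum_nonneg) auto
  define L where "L = E * (1 + K) ^ (p + 1) + 1"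
  have L0: "L > 0" unfolding L_def using E0 K by (intro add_nonneg_pos mult_nonneg_nonneg) auto
  have main: "m \<xi> - m \<eta> \<le> L * \<bar>\<xi> - \<eta>\<bar>" if le: "m \<eta> \<le> m \<xi>" for \<xi> \<eta>
  proof -
    define x where "x = m \<xi>"
    define y where "y = m \<eta>"
    have x1: "1 \<le> x" and y1: "1 \<le> y" using m_ge1 by (auto simp: x_def y_def)
    have yx: "y \<le> x" using le by (simp add: x_def y_def)
    have "(x - y) * x ^ (p + 1) \<le> x ^ n - y ^ n"
      using pow_diff_lower[of y x n] y1 yx by simp
    also have "\<dots> = PP \<xi> - PP \<eta>" unfolding x_def y_def m_pow by (rule refl)
    also have "\<dots> \<le> \<bar>\<xi> - \<eta>\<bar> * E * (1 + max \<bar>\<xi>\<bar> \<bar>\<eta>\<bar>) ^ (p + 1)"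
      using PP_diff[of \<xi> \<eta>] unfolding E_def by linarith
    also have "\<dots> \<le> \<bar>\<xi> - \<eta>\<bar> * E * ((1 + K) * x) ^ (p + 1)"
    proof (intro mult_left_mono power_mono)
      have "\<bar>\<xi>\<bar> \<le> K * x" using Kb[of \<xi>] by (simp add: x_def)
      moreover have "\<bar>\<eta>\<bar> \<le> K * x" using Kb[of \<eta>] yx K by (simp add: y_def) (smt (verit) mult_left_mono)
      ultimately show "1 + max \<bar>\<xi>\<bar> \<bar>\<eta>\<bar> \<le> (1 + K) * x" using x1 by (simp add: algebra_simps)
    qed (use E0 in auto)
    also have "\<dots> = (\<bar>\<xi> - \<eta>\<bar> * E * (1 + K) ^ (p + 1)) * x ^ (p + 1)"
      by (simp add: power_mult_distrib)
    finally have "x - y \<le> \<bar>\<xi> - \<eta>\<bar> * E * (1 + K) ^ (p + 1)"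
      using x1 by (simp add: mult_le_cancel_right pos_add_strict)
    also have "\<dots> \<le> L * \<bar>\<xi> - \<eta>\<bar>" by (simp add: L_def algebra_simps)
    finally show ?thesis by (simp add: x_def y_def)
  qed
  have "\<bar>m \<xi> - m \<eta>\<bar> \<le> L * \<bar>\<xi> - \<eta>\<bar>" for \<xi> \<eta>
  proof (cases "m \<eta> \<le> m \<xi>")
    case True then show ?thesis using main[OF True] by simp
  next
    case False then show ?thesis using main[of \<xi> \<eta>] by (simp add: abs_minus_commute)
  qed
  then show ?thesis using L0 by blast
qed

end


lemma decay_nn:
  fixes q :: real assumes q: "q > 1"
  shows "(\<integral>\<^sup>+x. ennreal ((1 + \<bar>x\<bar>) powr (- q)) \<partial>lborel) < \<infinity>"
proof -
  define f where "f x = (if x \<in> {1..} then x powr (- q) else 0)" for x :: real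
  have fm[measurable]: "f \<in> borel_measurable borel" unfolding f_def by measurable
  have f0: "\<And>x. 0 \<le> f x" by (simp add: f_def)
  have "((\<lambda>x. x powr (- q)) has_integral - (1 powr (- q + 1)) / (- q + 1)) {1..}"
    by (rule has_integral_powr_to_inf) (use q in auto)
  then have "(f has_integral - (1 powr (- q + 1)) / (- q + 1)) UNIV"
    unfolding f_def by (subst has_integral_restrict_UNIV)
  then have I: "(\<integral>\<^sup>+x. ennreal (f x) \<partial>lborel) = ennreal (- (1 powr (- q + 1)) / (- q + 1))"
    by (rule nn_integral_has_integral_lborel[OF fm f0])
  have s1: "(\<integral>\<^sup>+x. ennreal (f x) \<partial>lborel) = (\<integral>\<^sup>+x. ennreal (f (1 + 1 * x)) \<partial>lborel)"
    using nn_integral_real_affine[of "\<lambda>x. ennreal (f x)" 1 1] by simp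
  have s2: "(\<integral>\<^sup>+x. ennreal (f x) \<partial>lborel) = (\<integral>\<^sup>+x. ennreal (f (1 + (-1) * x)) \<partial>lborel)"
    using nn_integral_real_affine[of "\<lambda>x. ennreal (f x)" "-1" 1] by simp
  have "(\<integral>\<^sup>+x. ennreal ((1 + \<bar>x\<bar>) powr (- q)) \<partial>lborel)
      \<le> (\<integral>\<^sup>+x. ennreal (f (1 + 1 * x)) + ennreal (f (1 + (-1) * x)) \<partial>lborel)"
  proof (rule nn_integral_mono)
    fix x :: real
    show "ennreal ((1 + \<bar>x\<bar>) powr (- q)) \<le> ennreal (f (1 + 1 * x)) + ennreal (f (1 + (-1) * x))"
    proof (cases "x \<ge> 0")
      case True then show ?thesis by (simp add: f_def add_increasing2)
    next
      case False then show ?thesis by (simp add: f_def add_increasing)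
    qed
  qed
  also have "\<dots> = (\<integral>\<^sup>+x. ennreal (f (1 + 1 * x)) \<partial>lborel) + (\<integral>\<^sup>+x. ennreal (f (1 + (-1) * x)) \<partial>lborel)"
    by (rule nn_integral_add) auto
  also have "\<dots> < \<infinity>" using I s1 s2 by (simp flip: s1 s2)
  finally show ?thesis .
qed

lemma decay_integrable:
  fixes q :: real assumes q: "q > 1"
  shows "integrable lborel (\<lambda>x. (1 + \<bar>x\<bar>) powr (- q))"
  by (rule integrableI_nonneg) (use decay_nn[OF q] in auto)

context setting begin

lemma m_lower2: "\<exists>K>0. \<forall>\<xi>. 1 + \<bar>\<xi>\<bar> \<le> K * m \<xi>"
proof -
  obtain K where K: "K > 0" "\<And>\<xi>. \<bar>\<xi>\<bar> \<le> K * m \<xi>" using lower by blast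
  have "1 + \<bar>\<xi>\<bar> \<le> (1 + K) * m \<xi>" for \<xi>
    using K(2)[of \<xi>] m_ge1[of \<xi>] by (simp add: algebra_simps)
  then show ?thesis using K(1) by (intro exI[of _ "1 + K"]) auto
qed

lemma m_decay:
  assumes t: "t > 1/2"
  shows "integrable lborel (\<lambda>\<xi>. (m \<xi> powr (- t))\<^sup>2)"
proof -
  obtain K where K: "K > 0" "\<And>\<xi>. 1 + \<bar>\<xi>\<bar> \<le> K * m \<xi>" using m_lower2 by blast
  show ?thesis
  proof (rule Bochner_Integration.integrable_bound)
    show "integrable lborel (\<lambda>\<xi>. K powr (2 * t) * (1 + \<bar>\<xi>\<bar>) powr (- (2 * t)))"
      using decay_integrable[of "2 * t"] t by simp
    show "(\<lambda>\<xi>. (m \<xi> powr (- t))\<^sup>2) \<in> borel_measurable lborel" by measurable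
    show "AE \<xi> in lborel. norm ((m \<xi> powr (- t))\<^sup>2) \<le> norm (K powr (2 * t) * (1 + \<bar>\<xi>\<bar>) powr (- (2 * t)))"
    proof (rule AE_I2)
      fix \<xi> :: real
      have mp: "0 < m \<xi>" by (rule m_pos)
      have "(m \<xi> powr (- t))\<^sup>2 = m \<xi> powr (- (2 * t))"
        using mp by (simp add: powr_powr[symmetric] powr_realpow[symmetric] power2_eq_square powr_add[symmetric])
      also have "\<dots> \<le> ((1 + \<bar>\<xi>\<bar>) / K) powr (- (2 * t))"
        using K(2)[of \<xi>] K(1) t by (intro powr_mono2') (auto simp: field_simps)
      also have "\<dots> = K powr (2 * t) * (1 + \<bar>\<xi>\<bar>) powr (- (2 * t))"
        using K(1) by (simp add: powr_divide powr_minus divide_simps)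
      finally show "norm ((m \<xi> powr (- t))\<^sup>2) \<le> norm (K powr (2 * t) * (1 + \<bar>\<xi>\<bar>) powr (- (2 * t)))"
        by simp
    qed
  qed
qed

end


lemma nn_translate:
  fixes f :: "real \<Rightarrow> ennreal" assumes [measurable]: "f \<in> borel_measurable borel"
  shows "(\<integral>\<^sup>+\<xi>. f (\<xi> - \<eta>) \<partial>lborel) = (\<integral>\<^sup>+x. f x \<partial>lborel)"
  using nn_integral_real_affine[of f 1 "- \<eta>"] by simp

lemma nn_reflect:
  fixes f :: "real \<Rightarrow> ennreal" assumes [measurable]: "f \<in> borel_measurable borel"
  shows "(\<integral>\<^sup>+\<eta>. f (\<xi> - \<eta>) \<partial>lborel) = (\<integral>\<^sup>+x. f x \<partial>lborel)"
  using nn_integral_real_affine[of f "-1" \<xi>] by simp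

lemma young:
  fixes F G :: "real \<Rightarrow> real"
  assumes [measurable]: "F \<in> borel_measurable borel" "G \<in> borel_measurable borel"
    and F0: "\<And>x. 0 \<le> F x" and G0: "\<And>x. 0 \<le> G x"
  shows "(\<integral>\<^sup>+\<xi>. (\<integral>\<^sup>+\<eta>. ennreal (F (\<xi> - \<eta>) * G \<eta>) \<partial>lborel)\<^sup>2 \<partial>lborel)
     \<le> (\<integral>\<^sup>+x. ennreal (G x) \<partial>lborel)\<^sup>2 * (\<integral>\<^sup>+x. ennreal ((F x)\<^sup>2) \<partial>lborel)"
proof -
  have CS: "(\<integral>\<^sup>+\<eta>. ennreal (F (\<xi> - \<eta>) * G \<eta>) \<partial>lborel)\<^sup>2
      \<le> (\<integral>\<^sup>+\<eta>. ennreal ((F (\<xi> - \<eta>))\<^sup>2 * G \<eta>) \<partial>lborel) * (\<integral>\<^sup>+x. ennreal (G x) \<partial>lborel)" for \<xi>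
  proof -
    have e1: "ennreal (F (\<xi> - \<eta>) * G \<eta>) = ennreal (F (\<xi> - \<eta>) * sqrt (G \<eta>)) * ennreal (sqrt (G \<eta>))" for \<eta>
      using F0 G0 by (simp add: ennreal_mult[symmetric] mult.assoc real_sqrt_mult[symmetric])
    have e2: "(ennreal (F (\<xi> - \<eta>) * sqrt (G \<eta>)))\<^sup>2 = ennreal ((F (\<xi> - \<eta>))\<^sup>2 * G \<eta>)" for \<eta>
      using F0 G0 by (subst ennreal_power) (auto simp: power_mult_distrib)
    have e3: "(ennreal (sqrt (G \<eta>)))\<^sup>2 = ennreal (G \<eta>)" for \<eta>
      using G0 by (subst ennreal_power) auto
    show ?thesis
      using Cauchy_Schwarz_nn_integral[of "\<lambda>\<eta>. ennreal (F (\<xi> - \<eta>) * sqrt (G \<eta>))" lborel "\<lambda>\<eta>. ennreal (sqrt (G \<eta>))"]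
      unfolding e1 e2 e3 by simp
  qed
  have "(\<integral>\<^sup>+\<xi>. (\<integral>\<^sup>+\<eta>. ennreal (F (\<xi> - \<eta>) * G \<eta>) \<partial>lborel)\<^sup>2 \<partial>lborel)
      \<le> (\<integral>\<^sup>+\<xi>. (\<integral>\<^sup>+\<eta>. ennreal ((F (\<xi> - \<eta>))\<^sup>2 * G \<eta>) \<partial>lborel) * (\<integral>\<^sup>+x. ennreal (G x) \<partial>lborel) \<partial>lborel)"
    by (intro nn_integral_mono CS)
  also have "\<dots> = (\<integral>\<^sup>+\<xi>. (\<integral>\<^sup>+\<eta>. ennreal ((F (\<xi> - \<eta>))\<^sup>2 * G \<eta>) \<partial>lborel) \<partial>lborel) * (\<integral>\<^sup>+x. ennreal (G x) \<partial>lborel)"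
    by (rule nn_integral_multc) measurable
  also have "(\<integral>\<^sup>+\<xi>. (\<integral>\<^sup>+\<eta>. ennreal ((F (\<xi> - \<eta>))\<^sup>2 * G \<eta>) \<partial>lborel) \<partial>lborel)
      = (\<integral>\<^sup>+\<eta>. (\<integral>\<^sup>+\<xi>. ennreal ((F (\<xi> - \<eta>))\<^sup>2 * G \<eta>) \<partial>lborel) \<partial>lborel)"
    by (rule lborel_pair.Fubini'[symmetric]) measurable
  also have "\<dots> = (\<integral>\<^sup>+\<eta>. ennreal (G \<eta>) * (\<integral>\<^sup>+x. ennreal ((F x)\<^sup>2) \<partial>lborel) \<partial>lborel)"
  proof (rule nn_integral_cong)
    fix \<eta> :: real
    have "(\<integral>\<^sup>+\<xi>. ennreal ((F (\<xi> - \<eta>))\<^sup>2 * G \<eta>) \<partial>lborel) = (\<integral>\<^sup>+\<xi>. ennreal ((F (\<xi> - \<eta>))\<^sup>2) * ennreal (G \<eta>) \<partial>lborel)"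
      using G0 by (simp add: ennreal_mult)
    also have "\<dots> = (\<integral>\<^sup>+\<xi>. ennreal ((F (\<xi> - \<eta>))\<^sup>2) \<partial>lborel) * ennreal (G \<eta>)"
      by (rule nn_integral_multc) measurable
    also have "\<dots> = (\<integral>\<^sup>+x. ennreal ((F x)\<^sup>2) \<partial>lborel) * ennreal (G \<eta>)"
      by (subst nn_translate[of "\<lambda>x. ennreal ((F x)\<^sup>2)"]) auto
    finally show "(\<integral>\<^sup>+\<xi>. ennreal ((F (\<xi> - \<eta>))\<^sup>2 * G \<eta>) \<partial>lborel) = ennreal (G \<eta>) * (\<integral>\<^sup>+x. ennreal ((F x)\<^sup>2) \<partial>lborel)"
      by (simp add: mult.commute)
  qed
  also have "\<dots> = (\<integral>\<^sup>+x. ennreal (G x) \<partial>lborel) * (\<integral>\<^sup>+x. ennreal ((F x)\<^sup>2) \<partial>lborel)"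
    by (rule nn_integral_multc) measurable
  finally show ?thesis by (simp add: power2_eq_square mult_ac)
qed

lemma young2:
  fixes F G :: "real \<Rightarrow> real"
  assumes [measurable]: "F \<in> borel_measurable borel" "G \<in> borel_measurable borel"
    and F0: "\<And>x. 0 \<le> F x" and G0: "\<And>x. 0 \<le> G x"
  shows "(\<integral>\<^sup>+\<xi>. (\<integral>\<^sup>+\<eta>. ennreal (F (\<xi> - \<eta>) * G \<eta>) \<partial>lborel)\<^sup>2 \<partial>lborel)
     \<le> (\<integral>\<^sup>+x. ennreal (F x) \<partial>lborel)\<^sup>2 * (\<integral>\<^sup>+x. ennreal ((G x)\<^sup>2) \<partial>lborel)"
proof -
  have "(\<integral>\<^sup>+\<eta>. ennreal (F (\<xi> - \<eta>) * G \<eta>) \<partial>lborel) = (\<integral>\<^sup>+\<eta>. ennreal (G (\<xi> - \<eta>) * F \<eta>) \<partial>lborel)" for \<xi>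
    using nn_reflect[of "\<lambda>\<eta>. ennreal (F (\<xi> - \<eta>) * G \<eta>)" \<xi>] by (simp add: mult.commute)
  then show ?thesis using young[of G F] F0 G0 by simp
qed



context setting begin

definition kap :: complex where "kap = complex_of_real (1 / sqrt (2 * pi))"

lemma Lsym_meas[measurable]: "Lsym c p \<in> borel_measurable borel"
  using cont_Lsym by (rule borel_measurable_continuous_onI)
lemma PP_meas[measurable]: "PP \<in> borel_measurable borel"
  using cont_PP by (rule borel_measurable_continuous_onI)

lemma Aop_formula:
  fixes U V :: "real \<Rightarrow> complex" and a b \<xi> :: real
  assumes i1: "integrable lborel (\<lambda>\<eta>. U (\<xi> - \<eta>) * (\<i> * complex_of_real \<eta> * V \<eta>))"
    and i2: "integrable lborel (\<lambda>\<eta>. U (\<xi> - \<eta>) * (Lsym c p \<eta> * (\<i> * complex_of_real \<eta> * (\<i> * complex_of_real \<eta> * (\<i> * complex_of_real \<eta> * V \<eta>)))))"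
  shows "integrable lborel (\<lambda>\<eta>. U (\<xi> - \<eta>) * (\<i> * complex_of_real \<eta> * V \<eta>) * complex_of_real (a + b * PP \<eta> / PP \<xi>))"
    and "Aop a b c p U V \<xi> = kap * (LINT \<eta>|lborel. U (\<xi> - \<eta>) * (\<i> * complex_of_real \<eta> * V \<eta>) * complex_of_real (a + b * PP \<eta> / PP \<xi>))"
proof -
  define f where "f \<eta> = U (\<xi> - \<eta>) * (\<i> * complex_of_real \<eta> * V \<eta>)" for \<eta>
  define g where "g \<eta> = U (\<xi> - \<eta>) * (Lsym c p \<eta> * (\<i> * complex_of_real \<eta> * (\<i> * complex_of_real \<eta> * (\<i> * complex_of_real \<eta> * V \<eta>))))" for \<eta>
  have fi: "integrable lborel f" using i1 by (simp add: f_def[abs_def])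
  have gi: "integrable lborel g" using i2 by (simp add: g_def[abs_def])
  have fg: "f \<eta> * complex_of_real (PP \<eta>) = f \<eta> - g \<eta>" for \<eta>
  proof -
    have "Lsym c p \<eta> * (\<i> * complex_of_real \<eta> * (\<i> * complex_of_real \<eta> * (\<i> * complex_of_real \<eta> * V \<eta>)))
        = (\<i> * complex_of_real \<eta> * V \<eta>) * complex_of_real (- ell \<eta> * \<eta>\<^sup>2)"
      by (simp add: Lsym_real power2_eq_square algebra_simps)
    then show ?thesis by (simp add: f_def g_def PP_def Lsym_real power2_eq_square algebra_simps)
  qed
  define I1 where "I1 = (LINT \<eta>|lborel. f \<eta>)"
  define I2 where "I2 = (LINT \<eta>|lborel. g \<eta>)"
  define J where "J = (LINT \<eta>|lborel. f \<eta> * complex_of_real (PP \<eta>))"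
  have J: "J = I1 - I2" unfolding J_def I1_def I2_def fg by (rule Bochner_Integration.integral_diff[OF fi gi])
  have fPi: "integrable lborel (\<lambda>\<eta>. f \<eta> * complex_of_real (PP \<eta>))" unfolding fg using fi gi by auto
  have "(LINT \<eta>|lborel. f \<eta> * complex_of_real (a + b * PP \<eta> / PP \<xi>))
      = (LINT \<eta>|lborel. complex_of_real a * f \<eta> + complex_of_real (b / PP \<xi>) * (f \<eta> * complex_of_real (PP \<eta>)))"
    by (intro Bochner_Integration.integral_cong) (auto simp: algebra_simps)
  also have "\<dots> = complex_of_real a * I1 + complex_of_real (b / PP \<xi>) * J"
    unfolding I1_def J_def using fi fPi by simp
  finally have T: "(LINT \<eta>|lborel. f \<eta> * complex_of_real (a + b * PP \<eta> / PP \<xi>)) = complex_of_real a * I1 + complex_of_real (b / PP \<xi>) * J" .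
  have L: "Lsym c p \<xi> * (\<i> * complex_of_real \<xi> * (\<i> * complex_of_real \<xi> * z)) = complex_of_real (1 - PP \<xi>) * z" for z
    by (simp add: Lsym_real PP_def power2_eq_square algebra_simps)
  have A: "Aop a b c p U V \<xi> = complex_of_real (a + b) * (kap * I1)
      + complex_of_real b * (complex_of_real (1 / PP \<xi>) * (complex_of_real (1 - PP \<xi>) * (kap * I1) - kap * I2))"
    unfolding Aop_def GammaPow_def Lop_def Dx_def Mult_def m_powr_negn L
    by (simp add: kap_def I1_def I2_def f_def g_def)
  have PPn: "PP \<xi> \<noteq> 0" using PP_pos[of \<xi>] by simp
  show "Aop a b c p U V \<xi> = kap * (LINT \<eta>|lborel. U (\<xi> - \<eta>) * (\<i> * complex_of_real \<eta> * V \<eta>) * complex_of_real (a + b * PP \<eta> / PP \<xi>))"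
    unfolding A f_def[symmetric] T J using PPn by (simp add: field_simps)
  have "integrable lborel (\<lambda>\<eta>. complex_of_real a * f \<eta> + complex_of_real (b / PP \<xi>) * (f \<eta> * complex_of_real (PP \<eta>)))"
    using fi fPi by simp
  then show "integrable lborel (\<lambda>\<eta>. U (\<xi> - \<eta>) * (\<i> * complex_of_real \<eta> * V \<eta>) * complex_of_real (a + b * PP \<eta> / PP \<xi>))"
    by (rule Bochner_Integration.integrable_cong[THEN iffD1, rotated 2]) (auto simp: f_def algebra_simps)
qed

end


lemma sum_pow_le: fixes x y :: real assumes "0 \<le> x" "0 \<le> y"
  shows "(x + y) ^ k \<le> 2 ^ k * (x ^ k + y ^ k)"
proof -
  have "(x + y) ^ k \<le> (2 * max x y) ^ k" using assms by (intro power_mono) auto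
  also have "\<dots> = 2 ^ k * max x y ^ k" by (simp add: power_mult_distrib)
  also have "max x y ^ k \<le> x ^ k + y ^ k" using assms by (simp add: max_def)
  then have "2 ^ k * max x y ^ k \<le> 2 ^ k * (x ^ k + y ^ k)" by simp
  finally show ?thesis .
qed

lemma L2prod:
  fixes f g :: "real \<Rightarrow> real"
  assumes [measurable]: "f \<in> borel_measurable borel" "g \<in> borel_measurable borel"
    and "integrable lborel (\<lambda>x. (f x)\<^sup>2)" "integrable lborel (\<lambda>x. (g x)\<^sup>2)"
  shows "integrable lborel (\<lambda>x. f x * g x)"
proof (rule Bochner_Integration.integrable_bound)
  show "integrable lborel (\<lambda>x. (f x)\<^sup>2 + (g x)\<^sup>2)" using assms by auto
  show "(\<lambda>x. f x * g x) \<in> borel_measurable lborel" by measurable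
  show "AE x in lborel. norm (f x * g x) \<le> norm ((f x)\<^sup>2 + (g x)\<^sup>2)"
  proof (rule AE_I2)
    fix x
    have "2 * \<bar>f x\<bar> * \<bar>g x\<bar> \<le> (f x)\<^sup>2 + (g x)\<^sup>2"
      using sum_squares_bound[of "\<bar>f x\<bar>" "\<bar>g x\<bar>"] by simp
    moreover have "0 \<le> \<bar>f x\<bar> * \<bar>g x\<bar>" by simp
    moreover have "norm (f x * g x) = \<bar>f x\<bar> * \<bar>g x\<bar>" by (simp add: abs_mult)
    moreover have "norm ((f x)\<^sup>2 + (g x)\<^sup>2) = (f x)\<^sup>2 + (g x)\<^sup>2" by simp
    ultimately show "norm (f x * g x) \<le> norm ((f x)\<^sup>2 + (g x)\<^sup>2)" by linarith
  qed
qed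

lemma int_reflect: fixes F :: "real \<Rightarrow> 'a::{banach, second_countable_topology}"
  assumes "integrable lborel F" shows "integrable lborel (\<lambda>\<eta>. F (\<xi> - \<eta>))"
  using lborel_integrable_real_affine[OF assms, of "-1" \<xi>] by simp

context setting begin

lemma m_nz[simp]: "m \<xi> \<noteq> 0" using m_pos[of \<xi>] by simp

lemma Hs_meas: "U \<in> Hs c p \<sigma> \<Longrightarrow> U \<in> borel_measurable borel"
  by (simp add: Hs_def)
lemma Hs_int: "U \<in> Hs c p \<sigma> \<Longrightarrow> integrable lborel (\<lambda>\<xi>. (m \<xi> powr \<sigma> * cmod (U \<xi>))\<^sup>2)"
  by (simp add: Hs_def)
lemma Hs_herm: "U \<in> Hs c p \<sigma> \<Longrightarrow> U (- \<xi>) = cnj (U \<xi>)"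
  by (simp add: Hs_def)

lemma Hs_weaker:
  assumes U: "U \<in> Hs c p \<sigma>" and t: "0 \<le> \<tau>" "\<tau> \<le> \<sigma>"
  shows "integrable lborel (\<lambda>\<xi>. (m \<xi> powr \<tau> * cmod (U \<xi>))\<^sup>2)"
proof (rule Bochner_Integration.integrable_bound[OF Hs_int[OF U]])
  have [measurable]: "U \<in> borel_measurable borel" using Hs_meas[OF U] .
  show "(\<lambda>\<xi>. (m \<xi> powr \<tau> * cmod (U \<xi>))\<^sup>2) \<in> borel_measurable lborel" by measurable
  show "AE x in lborel. norm ((m x powr \<tau> * cmod (U x))\<^sup>2) \<le> norm ((m x powr \<sigma> * cmod (U x))\<^sup>2)"
  proof (rule AE_I2)
    fix x
    have "m x powr \<tau> \<le> m x powr \<sigma>" using m_ge1[of x] t by (intro powr_mono) auto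
    then have "m x powr \<tau> * cmod (U x) \<le> m x powr \<sigma> * cmod (U x)" by (intro mult_right_mono) auto
    then show "norm ((m x powr \<tau> * cmod (U x))\<^sup>2) \<le> norm ((m x powr \<sigma> * cmod (U x))\<^sup>2)"
      by (simp add: power_mono)
  qed
qed

lemma Hs_L2: "U \<in> Hs c p \<sigma> \<Longrightarrow> 0 \<le> \<sigma> \<Longrightarrow> integrable lborel (\<lambda>\<xi>. (cmod (U \<xi>))\<^sup>2)"
  using Hs_weaker[of U \<sigma> 0] m_pos by (simp add: less_imp_neq[symmetric])

end

locale setting2 = setting +
  fixes a b s :: real
  assumes a: "a > 0" and b: "b > 0" and s: "s > 7/2 + real p"
begin

lemma PI:
  assumes U: "U \<in> Hs c p s" and W: "W \<in> Hs c p (s - 1)"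
  shows "integrable lborel (\<lambda>\<eta>. cmod (U (\<xi> - \<eta>)) * m \<eta> ^ (p + 3) * cmod (W \<eta>))"
proof -
  have [measurable]: "U \<in> borel_measurable borel" "W \<in> borel_measurable borel"
    using Hs_meas U W by auto
  obtain Lc where Lc: "Lc > 0" "\<And>x y. \<bar>m x - m y\<bar> \<le> Lc * \<bar>x - y\<bar>" using lipschitz by blast
  define A where "A = Lc * \<bar>\<xi>\<bar>"
  have A0: "A \<ge> 0" using Lc by (simp add: A_def)
  have mb: "m \<eta> \<le> m (\<xi> - \<eta>) + A" for \<eta>
  proof -
    have "m (\<eta> - \<xi>) = m (\<xi> - \<eta>)" using m_minus[of "\<xi> - \<eta>"] by simp
    moreover have "\<bar>m \<eta> - m (\<eta> - \<xi>)\<bar> \<le> Lc * \<bar>\<xi>\<bar>" using Lc(2)[of \<eta> "\<eta> - \<xi>"] by simp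
    ultimately show ?thesis by (simp add: A_def)
  qed
  have U3: "integrable lborel (\<lambda>\<zeta>. (m \<zeta> ^ (p + 3) * cmod (U \<zeta>))\<^sup>2)"
  proof -
    have "integrable lborel (\<lambda>\<zeta>. (m \<zeta> powr real (p + 3) * cmod (U \<zeta>))\<^sup>2)"
      using s by (intro Hs_weaker[OF U]) auto
    moreover have "m \<zeta> powr real (p + 3) = m \<zeta> ^ (p + 3)" for \<zeta> using m_pos[of \<zeta>] by (rule powr_realpow)
    ultimately show ?thesis by simp
  qed
  have U0: "integrable lborel (\<lambda>\<zeta>. (cmod (U \<zeta>))\<^sup>2)" using Hs_L2[OF U] s by simp
  have W0: "integrable lborel (\<lambda>\<zeta>. (cmod (W \<zeta>))\<^sup>2)" using Hs_L2[OF W] s by simp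
  have i1: "integrable lborel (\<lambda>\<eta>. (m (\<xi> - \<eta>) ^ (p + 3) * cmod (U (\<xi> - \<eta>))) * cmod (W \<eta>))"
    by (rule L2prod) (use int_reflect[OF U3] W0 in auto)
  have i2: "integrable lborel (\<lambda>\<eta>. cmod (U (\<xi> - \<eta>)) * cmod (W \<eta>))"
    by (rule L2prod) (use int_reflect[OF U0] W0 in auto)
  show ?thesis
  proof (rule Bochner_Integration.integrable_bound)
    show "integrable lborel (\<lambda>\<eta>. 2 ^ (p + 3) * ((m (\<xi> - \<eta>) ^ (p + 3) * cmod (U (\<xi> - \<eta>))) * cmod (W \<eta>))
        + 2 ^ (p + 3) * A ^ (p + 3) * (cmod (U (\<xi> - \<eta>)) * cmod (W \<eta>)))"
      using i1 i2 by auto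
    show "(\<lambda>\<eta>. cmod (U (\<xi> - \<eta>)) * m \<eta> ^ (p + 3) * cmod (W \<eta>)) \<in> borel_measurable lborel" by measurable
    show "AE \<eta> in lborel. norm (cmod (U (\<xi> - \<eta>)) * m \<eta> ^ (p + 3) * cmod (W \<eta>))
        \<le> norm (2 ^ (p + 3) * ((m (\<xi> - \<eta>) ^ (p + 3) * cmod (U (\<xi> - \<eta>))) * cmod (W \<eta>))
        + 2 ^ (p + 3) * A ^ (p + 3) * (cmod (U (\<xi> - \<eta>)) * cmod (W \<eta>)))"
    proof (rule AE_I2)
      fix \<eta>
      have "m \<eta> ^ (p + 3) \<le> (m (\<xi> - \<eta>) + A) ^ (p + 3)" using mb[of \<eta>] m_pos[of \<eta>] by (intro power_mono) auto
      also have "\<dots> \<le> 2 ^ (p + 3) * (m (\<xi> - \<eta>) ^ (p + 3) + A ^ (p + 3))"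
        using m_pos[of "\<xi> - \<eta>"] A0 by (intro sum_pow_le) auto
      finally have "cmod (U (\<xi> - \<eta>)) * m \<eta> ^ (p + 3) * cmod (W \<eta>)
          \<le> cmod (U (\<xi> - \<eta>)) * (2 ^ (p + 3) * (m (\<xi> - \<eta>) ^ (p + 3) + A ^ (p + 3))) * cmod (W \<eta>)"
        by (intro mult_right_mono mult_left_mono) auto
      also have "\<dots> = 2 ^ (p + 3) * ((m (\<xi> - \<eta>) ^ (p + 3) * cmod (U (\<xi> - \<eta>))) * cmod (W \<eta>))
        + 2 ^ (p + 3) * A ^ (p + 3) * (cmod (U (\<xi> - \<eta>)) * cmod (W \<eta>))"
        by (simp add: algebra_simps)
      finally show "norm (cmod (U (\<xi> - \<eta>)) * m \<eta> ^ (p + 3) * cmod (W \<eta>))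
        \<le> norm (2 ^ (p + 3) * ((m (\<xi> - \<eta>) ^ (p + 3) * cmod (U (\<xi> - \<eta>))) * cmod (W \<eta>))
        + 2 ^ (p + 3) * A ^ (p + 3) * (cmod (U (\<xi> - \<eta>)) * cmod (W \<eta>)))"
        using m_pos[of "\<xi> - \<eta>"] m_pos[of \<eta>] A0 by (simp add: abs_mult less_imp_le)
    qed
  qed
qed

end


context setting2 begin

definition kern :: "real \<Rightarrow> real \<Rightarrow> complex" where
  "kern \<xi> \<eta> = \<i> * complex_of_real \<eta> * complex_of_real ((a + b * PP \<eta> / PP \<xi>) * (m \<xi> / m \<eta> - 1))"

lemma m_le_pow: "m \<eta> \<le> m \<eta> ^ (p + 3)"
  using power_increasing[of 1 "p + 3" "m \<eta>"] m_ge1[of \<eta>] by simp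

lemma cond_V:
  assumes U: "U \<in> Hs c p s" and W: "W \<in> Hs c p (s - 1)"
    and Vm[measurable]: "V \<in> borel_measurable borel" and Vb: "\<And>\<eta>. cmod (V \<eta>) \<le> cmod (W \<eta>)"
  shows "integrable lborel (\<lambda>\<eta>. U (\<xi> - \<eta>) * (\<i> * complex_of_real \<eta> * V \<eta>))"
    and "integrable lborel (\<lambda>\<eta>. U (\<xi> - \<eta>) * (Lsym c p \<eta> * (\<i> * complex_of_real \<eta> * (\<i> * complex_of_real \<eta> * (\<i> * complex_of_real \<eta> * V \<eta>)))))"
proof -
  have [measurable]: "U \<in> borel_measurable borel" "W \<in> borel_measurable borel"
    using Hs_meas U W by auto
  obtain K where K: "K > 0" "\<And>\<xi>. \<bar>\<xi>\<bar> \<le> K * m \<xi>" using lower by blast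
  have maj: "integrable lborel (\<lambda>\<eta>. K * (cmod (U (\<xi> - \<eta>)) * m \<eta> ^ (p + 3) * cmod (W \<eta>)))"
    using PI[OF U W] by simp
  have eta: "\<bar>\<eta>\<bar> \<le> K * m \<eta> ^ (p + 3)" for \<eta>
    using order_trans[OF K(2)[of \<eta>] mult_left_mono[OF m_le_pow[of \<eta>]]] K(1) by simp
  show "integrable lborel (\<lambda>\<eta>. U (\<xi> - \<eta>) * (\<i> * complex_of_real \<eta> * V \<eta>))"
  proof (rule Bochner_Integration.integrable_bound[OF maj])
    show "(\<lambda>\<eta>. U (\<xi> - \<eta>) * (\<i> * complex_of_real \<eta> * V \<eta>)) \<in> borel_measurable lborel" by measurable
    show "AE \<eta> in lborel. norm (U (\<xi> - \<eta>) * (\<i> * complex_of_real \<eta> * V \<eta>)) \<le> norm (K * (cmod (U (\<xi> - \<eta>)) * m \<eta> ^ (p + 3) * cmod (W \<eta>)))"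
    proof (rule AE_I2)
      fix \<eta>
      have "norm (U (\<xi> - \<eta>) * (\<i> * complex_of_real \<eta> * V \<eta>)) = cmod (U (\<xi> - \<eta>)) * (\<bar>\<eta>\<bar> * cmod (V \<eta>))"
        by (simp add: norm_mult)
      also have "\<dots> \<le> cmod (U (\<xi> - \<eta>)) * ((K * m \<eta> ^ (p + 3)) * cmod (W \<eta>))"
        using K(1) m_pos[of \<eta>] by (intro mult_left_mono mult_mono eta Vb) (auto simp: less_imp_le)
      also have "\<dots> = norm (K * (cmod (U (\<xi> - \<eta>)) * m \<eta> ^ (p + 3) * cmod (W \<eta>)))"
        using K(1) m_pos[of \<eta>] by (simp add: abs_mult less_imp_le)
      finally show "norm (U (\<xi> - \<eta>) * (\<i> * complex_of_real \<eta> * V \<eta>)) \<le> norm (K * (cmod (U (\<xi> - \<eta>)) * m \<eta> ^ (p + 3) * cmod (W \<eta>)))" .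
    qed
  qed
  show "integrable lborel (\<lambda>\<eta>. U (\<xi> - \<eta>) * (Lsym c p \<eta> * (\<i> * complex_of_real \<eta> * (\<i> * complex_of_real \<eta> * (\<i> * complex_of_real \<eta> * V \<eta>)))))"
  proof (rule Bochner_Integration.integrable_bound[OF maj])
    show "(\<lambda>\<eta>. U (\<xi> - \<eta>) * (Lsym c p \<eta> * (\<i> * complex_of_real \<eta> * (\<i> * complex_of_real \<eta> * (\<i> * complex_of_real \<eta> * V \<eta>))))) \<in> borel_measurable lborel" by measurable
    show "AE \<eta> in lborel. norm (U (\<xi> - \<eta>) * (Lsym c p \<eta> * (\<i> * complex_of_real \<eta> * (\<i> * complex_of_real \<eta> * (\<i> * complex_of_real \<eta> * V \<eta>))))) \<le> norm (K * (cmod (U (\<xi> - \<eta>)) * m \<eta> ^ (p + 3) * cmod (W \<eta>)))"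
    proof (rule AE_I2)
      fix \<eta>
      have e: "ell \<eta> * \<bar>\<eta>\<bar> ^ 3 = (ell \<eta> * \<eta>\<^sup>2) * \<bar>\<eta>\<bar>" by (simp add: power2_eq_square power3_eq_cube abs_mult)
      have "ell \<eta> * \<eta>\<^sup>2 \<le> m \<eta> ^ (p + 2)" using m_pow[of \<eta>] by (simp add: PP_def)
      moreover have "\<bar>\<eta>\<bar> \<le> K * m \<eta>" using K(2) .
      ultimately have "(ell \<eta> * \<eta>\<^sup>2) * \<bar>\<eta>\<bar> \<le> m \<eta> ^ (p + 2) * (K * m \<eta>)"
        using ell_nonneg[of \<eta>] m_pos[of \<eta>] by (intro mult_mono) (auto simp: less_imp_le)
      also have "\<dots> = K * m \<eta> ^ (p + 3)" by (simp add: algebra_simps power_add power3_eq_cube power2_eq_square)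
      finally have le0: "(ell \<eta> * \<eta>\<^sup>2) * \<bar>\<eta>\<bar> \<le> K * m \<eta> ^ (p + 3)" .
      have le: "ell \<eta> * \<bar>\<eta>\<bar> ^ 3 \<le> K * m \<eta> ^ (p + 3)" by (subst e) (rule le0)
      have "norm (U (\<xi> - \<eta>) * (Lsym c p \<eta> * (\<i> * complex_of_real \<eta> * (\<i> * complex_of_real \<eta> * (\<i> * complex_of_real \<eta> * V \<eta>)))))
          = cmod (U (\<xi> - \<eta>)) * ((ell \<eta> * \<bar>\<eta>\<bar> ^ 3) * cmod (V \<eta>))"
        using ell_nonneg[of \<eta>] by (simp add: norm_mult Lsym_real power3_eq_cube)
      also have "\<dots> \<le> cmod (U (\<xi> - \<eta>)) * ((K * m \<eta> ^ (p + 3)) * cmod (W \<eta>))"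
        using K(1) m_pos[of \<eta>] by (intro mult_left_mono mult_mono le Vb) (auto simp: less_imp_le)
      also have "\<dots> = norm (K * (cmod (U (\<xi> - \<eta>)) * m \<eta> ^ (p + 3) * cmod (W \<eta>)))"
        using K(1) m_pos[of \<eta>] by (simp add: abs_mult less_imp_le)
      finally show "norm (U (\<xi> - \<eta>) * (Lsym c p \<eta> * (\<i> * complex_of_real \<eta> * (\<i> * complex_of_real \<eta> * (\<i> * complex_of_real \<eta> * V \<eta>))))) \<le> norm (K * (cmod (U (\<xi> - \<eta>)) * m \<eta> ^ (p + 3) * cmod (W \<eta>)))" .
    qed
  qed
qed

end


context setting2 begin

lemma Bop_formula:
  assumes U: "U \<in> Hs c p s" and W: "W \<in> Hs c p (s - 1)"
  shows "integrable lborel (\<lambda>\<eta>. U (\<xi> - \<eta>) * W \<eta> * kern \<xi> \<eta>)"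
    and "Bop a b c p U W \<xi> = kap * (LINT \<eta>|lborel. U (\<xi> - \<eta>) * W \<eta> * kern \<xi> \<eta>)"
proof -
  have [measurable]: "U \<in> borel_measurable borel" and Wm[measurable]: "W \<in> borel_measurable borel"
    using Hs_meas U W by auto
  define V1 where "V1 = GammaPow c p (-1) W"
  have V1e: "V1 \<eta> = complex_of_real (1 / m \<eta>) * W \<eta>" for \<eta>
    using m_pos[of \<eta>] by (simp add: V1_def GammaPow_def)
  have V1m[measurable]: "V1 \<in> borel_measurable borel" unfolding V1_def GammaPow_def by measurable
  have V1b: "cmod (V1 \<eta>) \<le> cmod (W \<eta>)" for \<eta>
  proof -
    have "cmod (V1 \<eta>) = (1 / m \<eta>) * cmod (W \<eta>)" using m_pos[of \<eta>] by (simp add: V1e norm_mult norm_divide)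
    also have "\<dots> \<le> 1 * cmod (W \<eta>)" using m_ge1[of \<eta>] by (intro mult_right_mono) auto
    finally show ?thesis by simp
  qed
  note A1 = Aop_formula[where a=a and b=b and \<xi>=\<xi>, OF cond_V[OF U W V1m V1b]]
  note A2 = Aop_formula[where a=a and b=b and \<xi>=\<xi>, OF cond_V[OF U W Wm order.refl]]
  define F1 where "F1 \<eta> = U (\<xi> - \<eta>) * (\<i> * complex_of_real \<eta> * V1 \<eta>) * complex_of_real (a + b * PP \<eta> / PP \<xi>)" for \<eta>
  define F2 where "F2 \<eta> = U (\<xi> - \<eta>) * (\<i> * complex_of_real \<eta> * W \<eta>) * complex_of_real (a + b * PP \<eta> / PP \<xi>)" for \<eta>
  have i1: "integrable lborel F1" using A1(1) unfolding F1_def[abs_def] .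
  have i2: "integrable lborel F2" using A2(1) unfolding F2_def[abs_def] by simp
  have pt: "complex_of_real (m \<xi>) * F1 \<eta> - F2 \<eta> = U (\<xi> - \<eta>) * W \<eta> * kern \<xi> \<eta>" for \<eta>
  proof -
    have "PP \<xi> \<noteq> 0" using PP_pos[of \<xi>] by simp
    then show ?thesis using m_pos[of \<eta>] unfolding F1_def F2_def kern_def V1e
      by (simp add: field_simps)
  qed
  have "integrable lborel (\<lambda>\<eta>. complex_of_real (m \<xi>) * F1 \<eta> - F2 \<eta>)" using i1 i2 by auto
  then show "integrable lborel (\<lambda>\<eta>. U (\<xi> - \<eta>) * W \<eta> * kern \<xi> \<eta>)" unfolding pt .
  have "Bop a b c p U W \<xi> = complex_of_real (m \<xi>) * Aop a b c p U V1 \<xi> - Aop a b c p U W \<xi>"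
    using m_pos[of \<xi>] by (simp add: Bop_def GammaPow_def V1_def)
  also have "\<dots> = kap * (complex_of_real (m \<xi>) * (LINT \<eta>|lborel. F1 \<eta>) - (LINT \<eta>|lborel. F2 \<eta>))"
    unfolding A1(2) A2(2) F1_def F2_def by (simp add: algebra_simps)
  also have "(complex_of_real (m \<xi>) * (LINT \<eta>|lborel. F1 \<eta>) - (LINT \<eta>|lborel. F2 \<eta>))
      = (LINT \<eta>|lborel. complex_of_real (m \<xi>) * F1 \<eta> - F2 \<eta>)"
    using i1 i2 by simp
  finally show "Bop a b c p U W \<xi> = kap * (LINT \<eta>|lborel. U (\<xi> - \<eta>) * W \<eta> * kern \<xi> \<eta>)"
    unfolding pt .
qed

end


lemma powr_sum_bound:
  fixes x y z B \<alpha> :: real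
  assumes "0 < x" "0 < y" "0 < z" "0 \<le> \<alpha>" "0 < B" "x \<le> B * (y + z)"
  shows "x powr \<alpha> \<le> (2 * B) powr \<alpha> * (y powr \<alpha> + z powr \<alpha>)"
proof -
  have "y + z \<le> 2 * max y z" by (simp add: max_def)
  then have "B * (y + z) \<le> B * (2 * max y z)" using assms by (intro mult_left_mono) auto
  then have "x \<le> B * (2 * max y z)" using assms(6) by linarith
  then have "x \<le> (2 * B) * max y z" by (simp add: ac_simps)
  then have "x powr \<alpha> \<le> ((2 * B) * max y z) powr \<alpha>" using assms by (intro powr_mono2) auto
  also have "\<dots> = (2 * B) powr \<alpha> * max y z powr \<alpha>" using assms by (auto intro!: powr_mult simp: max_def)
  also have "max y z powr \<alpha> \<le> y powr \<alpha> + z powr \<alpha>" by (simp add: max_def)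
  then have "(2 * B) powr \<alpha> * max y z powr \<alpha> \<le> (2 * B) powr \<alpha> * (y powr \<alpha> + z powr \<alpha>)"
    by (intro mult_left_mono) auto
  finally show ?thesis .
qed

context setting2 begin

lemma kern_norm: "cmod (kern \<xi> \<eta>) = \<bar>\<eta>\<bar> * (a + b * PP \<eta> / PP \<xi>) * (\<bar>m \<xi> - m \<eta>\<bar> / m \<eta>)"
proof -
  have nn: "0 \<le> a + b * PP \<eta> / PP \<xi>" using a b PP_pos[of \<eta>] PP_pos[of \<xi>] by simp
  have "m \<xi> / m \<eta> - 1 = (m \<xi> - m \<eta>) / m \<eta>"
    using m_pos[of \<eta>] by (simp add: diff_divide_distrib)
  then have e: "\<bar>m \<xi> / m \<eta> - 1\<bar> = \<bar>m \<xi> - m \<eta>\<bar> / m \<eta>"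
    by (simp only: abs_divide abs_of_pos[OF m_pos])
  have "cmod (kern \<xi> \<eta>) = \<bar>\<eta>\<bar> * \<bar>(a + b * PP \<eta> / PP \<xi>) * (m \<xi> / m \<eta> - 1)\<bar>"
    unfolding kern_def norm_mult by (simp del: of_real_mult of_real_add of_real_divide of_real_diff add: of_real_mult[symmetric])
  also have "\<dots> = \<bar>\<eta>\<bar> * ((a + b * PP \<eta> / PP \<xi>) * \<bar>m \<xi> / m \<eta> - 1\<bar>)"
    by (simp only: abs_mult abs_of_nonneg[OF nn])
  finally show ?thesis unfolding e by (simp add: mult.assoc)
qed

lemma kern_bound:
  "\<exists>C>0. \<forall>\<xi> \<eta>. m \<xi> powr (s - 1) * cmod (kern \<xi> \<eta>)
      \<le> C * (m (\<xi> - \<eta>) * m \<eta> powr (s - 1) + m (\<xi> - \<eta>) powr s + m (\<xi> - \<eta>) powr (s - real p - 2) * m \<eta> ^ (p + 2))"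
proof -
  obtain K where K: "K > 0" "\<And>\<xi>. \<bar>\<xi>\<bar> \<le> K * m \<xi>" using lower by blast
  obtain Lc where Lc: "Lc > 0" "\<And>x y. \<bar>m x - m y\<bar> \<le> Lc * \<bar>x - y\<bar>" using lipschitz by blast
  define B where "B = max 1 (Lc * K)"
  have B: "B > 0" "1 \<le> B" "Lc * K \<le> B" by (auto simp: B_def)
  define \<sigma> where "\<sigma> = s - 1"
  have \<sigma>n: "real n \<le> \<sigma>" using s by (simp add: \<sigma>_def)
  define C1 where "C1 = a * (2 * B) powr \<sigma> + b * (2 * B) powr (\<sigma> - real n)"
  have C1: "C1 > 0" using a b B by (simp add: C1_def add_pos_pos)
  define C where "C = K * (Lc * K) * C1"
  have C: "C > 0" using K Lc C1 by (simp add: C_def)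
  have main: "m \<xi> powr \<sigma> * cmod (kern \<xi> \<eta>)
      \<le> C * (m (\<xi> - \<eta>) * m \<eta> powr \<sigma> + m (\<xi> - \<eta>) powr s + m (\<xi> - \<eta>) powr (s - real p - 2) * m \<eta> ^ (p + 2))" for \<xi> \<eta>
  proof -
    define x where "x = m \<xi>"
    define y where "y = m \<eta>"
    define z where "z = m (\<xi> - \<eta>)"
    have x0: "x > 0" and y0: "y > 0" and z0: "z > 0" using m_pos by (auto simp: x_def y_def z_def)
    have xy: "\<bar>x - y\<bar> \<le> Lc * K * z"
    proof -
      have "\<bar>x - y\<bar> \<le> Lc * \<bar>\<xi> - \<eta>\<bar>" using Lc(2) by (simp add: x_def y_def)
      also have "\<dots> \<le> Lc * (K * z)" using K(2)[of "\<xi> - \<eta>"] Lc(1) by (intro mult_left_mono) (auto simp: z_def)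
      finally show ?thesis by (simp add: mult.assoc)
    qed
    have ey: "\<bar>\<eta>\<bar> / y \<le> K" using K(2)[of \<eta>] y0 by (simp add: y_def divide_le_eq)
    have PPe: "PP \<eta> / PP \<xi> = y ^ n / x ^ n" unfolding x_def y_def m_pow by (rule refl)
    have k0: "0 \<le> a + b * (y ^ n / x ^ n)" using a b x0 y0 by simp
    have "cmod (kern \<xi> \<eta>) = (\<bar>\<eta>\<bar> / y) * \<bar>x - y\<bar> * (a + b * (y ^ n / x ^ n))"
    proof -
      have bb: "b * PP \<eta> / PP \<xi> = b * (y ^ n / x ^ n)" using PPe by (metis times_divide_eq_right)
      show ?thesis unfolding kern_norm bb using y0 by (simp add: x_def[symmetric] y_def[symmetric])
    qed
    also have "\<dots> \<le> K * (Lc * K * z) * (a + b * (y ^ n / x ^ n))"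
      using ey xy k0 y0 K(1) by (intro mult_right_mono mult_mono) auto
    finally have kb: "cmod (kern \<xi> \<eta>) \<le> K * (Lc * K * z) * (a + b * (y ^ n / x ^ n))" .
    have xpow: "x powr \<sigma> * (a + b * (y ^ n / x ^ n)) = a * x powr \<sigma> + b * (y ^ n * x powr (\<sigma> - real n))"
    proof -
      have "x powr \<sigma> / x ^ n = x powr (\<sigma> - real n)" unfolding powr_realpow[OF x0, symmetric] by (simp only: powr_diff)
      then show ?thesis by (simp add: algebra_simps) (metis times_divide_eq_right mult.commute)
    qed
    have xB: "x \<le> B * (y + z)"
    proof -
      have "x \<le> y + Lc * K * z" using xy by simp
      also have "\<dots> \<le> B * y + B * z" using B y0 z0 by (intro add_mono mult_right_mono) auto
      finally show ?thesis by (simp add: algebra_simps)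
    qed
    have b1: "x powr \<sigma> \<le> (2 * B) powr \<sigma> * (y powr \<sigma> + z powr \<sigma>)"
      using \<sigma>n by (intro powr_sum_bound x0 y0 z0 B xB) auto
    have b2: "x powr (\<sigma> - real n) \<le> (2 * B) powr (\<sigma> - real n) * (y powr (\<sigma> - real n) + z powr (\<sigma> - real n))"
      using \<sigma>n by (intro powr_sum_bound x0 y0 z0 B xB) auto
    have yn: "y ^ n * y powr (\<sigma> - real n) = y powr \<sigma>"
      unfolding powr_realpow[OF y0, symmetric] powr_add[symmetric] by simp
    have "a * x powr \<sigma> + b * (y ^ n * x powr (\<sigma> - real n))
        \<le> a * ((2 * B) powr \<sigma> * (y powr \<sigma> + z powr \<sigma>)) + b * (y ^ n * ((2 * B) powr (\<sigma> - real n) * (y powr (\<sigma> - real n) + z powr (\<sigma> - real n))))"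
      using a b y0 by (intro add_mono mult_left_mono b1 b2) auto
    also have "\<dots> = a * (2 * B) powr \<sigma> * (y powr \<sigma> + z powr \<sigma>) + b * (2 * B) powr (\<sigma> - real n) * (y powr \<sigma> + z powr (\<sigma> - real n) * y ^ n)"
      using yn by (simp add: algebra_simps)
    also have "\<dots> \<le> C1 * (y powr \<sigma> + z powr \<sigma> + z powr (\<sigma> - real n) * y ^ n)"
    proof -
      have t1: "a * (2 * B) powr \<sigma> * (y powr \<sigma> + z powr \<sigma>) \<le> a * (2 * B) powr \<sigma> * (y powr \<sigma> + z powr \<sigma> + z powr (\<sigma> - real n) * y ^ n)"
        using a y0 z0 by (intro mult_left_mono) auto
      have t2: "b * (2 * B) powr (\<sigma> - real n) * (y powr \<sigma> + z powr (\<sigma> - real n) * y ^ n) \<le> b * (2 * B) powr (\<sigma> - real n) * (y powr \<sigma> + z powr \<sigma> + z powr (\<sigma> - real n) * y ^ n)"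
        using b y0 z0 by (intro mult_left_mono) auto
      show ?thesis using add_mono[OF t1 t2] by (simp add: C1_def algebra_simps)
    qed
    finally have bx: "x powr \<sigma> * (a + b * (y ^ n / x ^ n)) \<le> C1 * (y powr \<sigma> + z powr \<sigma> + z powr (\<sigma> - real n) * y ^ n)"
      unfolding xpow .
    have "x powr \<sigma> * cmod (kern \<xi> \<eta>) \<le> x powr \<sigma> * (K * (Lc * K * z) * (a + b * (y ^ n / x ^ n)))"
      using kb by (intro mult_left_mono) auto
    also have "\<dots> = K * (Lc * K) * z * (x powr \<sigma> * (a + b * (y ^ n / x ^ n)))" by (simp add: algebra_simps)
    also have "\<dots> \<le> K * (Lc * K) * z * (C1 * (y powr \<sigma> + z powr \<sigma> + z powr (\<sigma> - real n) * y ^ n))"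
      using K Lc z0 by (intro mult_left_mono bx) auto
    also have "\<dots> = C * (z * y powr \<sigma> + z * z powr \<sigma> + z * z powr (\<sigma> - real n) * y ^ n)"
      by (simp add: C_def algebra_simps)
    also have "z * z powr \<sigma> = z powr s"
    proof -
      have "z * z powr \<sigma> = z powr (1 + \<sigma>)" using z0 by (simp add: powr_add)
      then show ?thesis by (simp add: \<sigma>_def)
    qed
    also have "z * z powr (\<sigma> - real n) = z powr (s - real p - 2)"
    proof -
      have "z powr (1 + (\<sigma> - real n)) = z powr 1 * z powr (\<sigma> - real n)" by (rule powr_add)
      then have "z * z powr (\<sigma> - real n) = z powr (1 + (\<sigma> - real n))" using z0 by simp
      also have "1 + (\<sigma> - real n) = s - real p - 2" by (simp add: \<sigma>_def)
      finally show ?thesis .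
    qed
    finally show ?thesis by (simp add: x_def y_def z_def)
  qed
  show ?thesis using C main unfolding \<sigma>_def by blast
qed

end


lemma ennreal_sq3:
  fixes x y z :: ennreal
  shows "(x + y + z)\<^sup>2 \<le> 3 * (x\<^sup>2 + y\<^sup>2 + z\<^sup>2)"
proof -
  have "(x + y + z)\<^sup>2 = x\<^sup>2 + y\<^sup>2 + z\<^sup>2 + 2 * x * y + 2 * y * z + 2 * x * z"
    unfolding power2_eq_square mult_2 by (simp only: distrib_left distrib_right add_ac mult_ac)
  also have "\<dots> \<le> x\<^sup>2 + y\<^sup>2 + z\<^sup>2 + (x\<^sup>2 + y\<^sup>2) + (y\<^sup>2 + z\<^sup>2) + (x\<^sup>2 + z\<^sup>2)"
    by (intro add_mono sum_of_squares_ge_ennreal order.refl)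
  also have "\<dots> = 3 * (x\<^sup>2 + y\<^sup>2 + z\<^sup>2)"
  proof -
    have "(3::ennreal) = 1 + 1 + 1" by simp
    then show ?thesis by (simp only: ring_distribs mult_1 add_ac)
  qed
  finally show ?thesis .
qed

lemma L_cs:
  fixes f g :: "real \<Rightarrow> real"
  assumes [measurable]: "f \<in> borel_measurable borel" "g \<in> borel_measurable borel"
    and "\<And>x. 0 \<le> f x" "\<And>x. 0 \<le> g x"
  shows "(\<integral>\<^sup>+x. ennreal (f x * g x) \<partial>lborel)\<^sup>2 \<le> (\<integral>\<^sup>+x. ennreal ((f x)\<^sup>2) \<partial>lborel) * (\<integral>\<^sup>+x. ennreal ((g x)\<^sup>2) \<partial>lborel)"
proof -
  have e1: "ennreal (f x * g x) = ennreal (f x) * ennreal (g x)" for x using assms by (simp add: ennreal_mult)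
  have e2: "ennreal ((f x)\<^sup>2) = (ennreal (f x))\<^sup>2" for x using assms by (simp add: ennreal_power)
  have e3: "ennreal ((g x)\<^sup>2) = (ennreal (g x))\<^sup>2" for x using assms by (simp add: ennreal_power)
  show ?thesis unfolding e1 e2 e3 by (rule Cauchy_Schwarz_nn_integral) auto
qed

context setting begin

lemma L_hn:
  assumes U: "U \<in> Hs c p \<tau>"
  shows "(\<integral>\<^sup>+x. ennreal ((m x powr \<tau> * cmod (U x))\<^sup>2) \<partial>lborel) = ennreal ((hnorm c p \<tau> U)\<^sup>2)"
proof -
  have "(\<integral>\<^sup>+x. ennreal ((m x powr \<tau> * cmod (U x))\<^sup>2) \<partial>lborel) = ennreal (LINT x|lborel. (m x powr \<tau> * cmod (U x))\<^sup>2)"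
    by (rule nn_integral_eq_integral[OF Hs_int[OF U]]) auto
  moreover have "(hnorm c p \<tau> U)\<^sup>2 = (LINT x|lborel. (m x powr \<tau> * cmod (U x))\<^sup>2)"
    unfolding hnorm_def by (simp add: integral_nonneg_AE)
  ultimately show ?thesis by simp
qed

definition dd :: "real \<Rightarrow> real" where "dd t = (LINT x|lborel. (m x powr (- t))\<^sup>2)"

lemma L_dec:
  assumes t: "t > 1/2"
  shows "(\<integral>\<^sup>+x. ennreal ((m x powr (- t))\<^sup>2) \<partial>lborel) = ennreal (dd t)" and "0 \<le> dd t"
proof -
  show "(\<integral>\<^sup>+x. ennreal ((m x powr (- t))\<^sup>2) \<partial>lborel) = ennreal (dd t)"
    unfolding dd_def by (rule nn_integral_eq_integral[OF m_decay[OF t]]) auto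
  show "0 \<le> dd t" unfolding dd_def by (simp add: integral_nonneg_AE)
qed

lemma L1:
  assumes U: "U \<in> Hs c p \<tau>" and t: "t > 1/2"
    and F: "\<And>x. F x = m x powr (- t) * (m x powr \<tau> * cmod (U x))"
  shows "(\<integral>\<^sup>+x. ennreal (F x) \<partial>lborel)\<^sup>2 \<le> ennreal (dd t * (hnorm c p \<tau> U)\<^sup>2)"
proof -
  have [measurable]: "U \<in> borel_measurable borel" using Hs_meas[OF U] .
  have "(\<integral>\<^sup>+x. ennreal (F x) \<partial>lborel)\<^sup>2 = (\<integral>\<^sup>+x. ennreal (m x powr (- t) * (m x powr \<tau> * cmod (U x))) \<partial>lborel)\<^sup>2"
    unfolding F ..
  also have "\<dots> \<le> (\<integral>\<^sup>+x. ennreal ((m x powr (- t))\<^sup>2) \<partial>lborel) * (\<integral>\<^sup>+x. ennreal ((m x powr \<tau> * cmod (U x))\<^sup>2) \<partial>lborel)"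
    by (rule L_cs) auto
  also have "\<dots> = ennreal (dd t) * ennreal ((hnorm c p \<tau> U)\<^sup>2)"
    unfolding L_dec(1)[OF t] L_hn[OF U] ..
  also have "\<dots> = ennreal (dd t * (hnorm c p \<tau> U)\<^sup>2)"
    using L_dec(2)[OF t] by (simp add: ennreal_mult)
  finally show ?thesis .
qed

end


context setting2 begin

lemma Bop_est:
  "\<exists>C0\<ge>0. \<forall>U\<in>Hs c p s. \<forall>W\<in>Hs c p (s - 1).
     (\<integral>\<^sup>+\<xi>. ennreal ((m \<xi> powr (s - 1) * cmod (Bop a b c p U W \<xi>))\<^sup>2) \<partial>lborel)
       \<le> ennreal (C0 * (hnorm c p s U)\<^sup>2 * (hnorm c p (s - 1) W)\<^sup>2)"
proof -
  obtain C where C: "C > 0" and Cb: "\<And>\<xi> \<eta>. m \<xi> powr (s - 1) * cmod (kern \<xi> \<eta>)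
      \<le> C * (m (\<xi> - \<eta>) * m \<eta> powr (s - 1) + m (\<xi> - \<eta>) powr s + m (\<xi> - \<eta>) powr (s - real p - 2) * m \<eta> ^ (p + 2))"
    using kern_bound by blast
  define kC where "kC = cmod kap * C"
  have kC0: "0 \<le> kC" using C by (simp add: kC_def)
  have t1: "s - 1 > 1/2" and t3: "s - real p - 3 > 1/2" using s by auto
  define C0 where "C0 = 3 * kC\<^sup>2 * (2 * dd (s - 1) + dd (s - real p - 3))"
  have C00: "C0 \<ge> 0" using L_dec(2)[OF t1] L_dec(2)[OF t3] by (simp add: C0_def)
  have "(\<integral>\<^sup>+\<xi>. ennreal ((m \<xi> powr (s - 1) * cmod (Bop a b c p U W \<xi>))\<^sup>2) \<partial>lborel)
       \<le> ennreal (C0 * (hnorm c p s U)\<^sup>2 * (hnorm c p (s - 1) W)\<^sup>2)"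
    if U: "U \<in> Hs c p s" and W: "W \<in> Hs c p (s - 1)" for U W
  proof -
    have [measurable]: "U \<in> borel_measurable borel" "W \<in> borel_measurable borel"
      using Hs_meas U W by auto
    define NU where "NU = hnorm c p s U"
    define NW where "NW = hnorm c p (s - 1) W"
    define F1 where "F1 x = m x * cmod (U x)" for x
    define F2 where "F2 x = m x powr s * cmod (U x)" for x
    define F3 where "F3 x = m x powr (s - real p - 2) * cmod (U x)" for x
    define G1 where "G1 x = m x powr (s - 1) * cmod (W x)" for x
    define G2 where "G2 x = cmod (W x)" for x
    define G3 where "G3 x = m x ^ (p + 2) * cmod (W x)" for x
    have [measurable]: "F1 \<in> borel_measurable borel" "F2 \<in> borel_measurable borel" "F3 \<in> borel_measurable borel"
      "G1 \<in> borel_measurable borel" "G2 \<in> borel_measurable borel" "G3 \<in> borel_measurable borel"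
      unfolding F1_def F2_def F3_def G1_def G2_def G3_def by measurable
    have pos: "0 \<le> F1 x" "0 \<le> F2 x" "0 \<le> F3 x" "0 \<le> G1 x" "0 \<le> G2 x" "0 \<le> G3 x" for x
      using m_pos[of x] by (auto simp: F1_def F2_def F3_def G1_def G2_def G3_def)
    define T1 where "T1 \<xi> = (\<integral>\<^sup>+\<eta>. ennreal (F1 (\<xi> - \<eta>) * G1 \<eta>) \<partial>lborel)" for \<xi>
    define T2 where "T2 \<xi> = (\<integral>\<^sup>+\<eta>. ennreal (F2 (\<xi> - \<eta>) * G2 \<eta>) \<partial>lborel)" for \<xi>
    define T3 where "T3 \<xi> = (\<integral>\<^sup>+\<eta>. ennreal (F3 (\<xi> - \<eta>) * G3 \<eta>) \<partial>lborel)" for \<xi>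
    have [measurable]: "T1 \<in> borel_measurable borel" "T2 \<in> borel_measurable borel" "T3 \<in> borel_measurable borel"
      unfolding T1_def T2_def T3_def by measurable
    have ptb: "m \<xi> powr (s - 1) * cmod (U (\<xi> - \<eta>) * W \<eta> * kern \<xi> \<eta>)
        \<le> C * (F1 (\<xi> - \<eta>) * G1 \<eta> + F2 (\<xi> - \<eta>) * G2 \<eta> + F3 (\<xi> - \<eta>) * G3 \<eta>)" for \<xi> \<eta>
    proof -
      have "m \<xi> powr (s - 1) * cmod (U (\<xi> - \<eta>) * W \<eta> * kern \<xi> \<eta>)
          = (m \<xi> powr (s - 1) * cmod (kern \<xi> \<eta>)) * (cmod (U (\<xi> - \<eta>)) * cmod (W \<eta>))"
        by (simp add: norm_mult)
      also have "\<dots> \<le> (C * (m (\<xi> - \<eta>) * m \<eta> powr (s - 1) + m (\<xi> - \<eta>) powr s + m (\<xi> - \<eta>) powr (s - real p - 2) * m \<eta> ^ (p + 2)))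
          * (cmod (U (\<xi> - \<eta>)) * cmod (W \<eta>))"
        by (intro mult_right_mono Cb) auto
      also have "\<dots> = C * (F1 (\<xi> - \<eta>) * G1 \<eta> + F2 (\<xi> - \<eta>) * G2 \<eta> + F3 (\<xi> - \<eta>) * G3 \<eta>)"
        by (simp add: F1_def F2_def F3_def G1_def G2_def G3_def algebra_simps)
      finally show ?thesis .
    qed
    have stepA: "ennreal (m \<xi> powr (s - 1) * cmod (Bop a b c p U W \<xi>)) \<le> ennreal kC * (T1 \<xi> + T2 \<xi> + T3 \<xi>)" for \<xi>
    proof -
      define h where "h \<eta> = U (\<xi> - \<eta>) * W \<eta> * kern \<xi> \<eta>" for \<eta>
      have hi: "integrable lborel h" using Bop_formula(1)[OF U W, of \<xi>] unfolding h_def[abs_def] .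
      have hm[measurable]: "h \<in> borel_measurable lborel" using hi by auto
      have "ennreal (m \<xi> powr (s - 1) * cmod (Bop a b c p U W \<xi>))
          = ennreal (m \<xi> powr (s - 1) * cmod kap) * ennreal (cmod (LINT \<eta>|lborel. h \<eta>))"
        unfolding Bop_formula(2)[OF U W, of \<xi>] h_def[symmetric]
        by (simp add: norm_mult ennreal_mult[symmetric] mult.assoc)
      also have "\<dots> \<le> ennreal (m \<xi> powr (s - 1) * cmod kap) * (\<integral>\<^sup>+\<eta>. ennreal (norm (h \<eta>)) \<partial>lborel)"
        by (intro mult_left_mono integral_norm_bound_ennreal hi) auto
      also have "\<dots> = (\<integral>\<^sup>+\<eta>. ennreal (m \<xi> powr (s - 1) * cmod kap) * ennreal (norm (h \<eta>)) \<partial>lborel)"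
        by (rule nn_integral_cmult[symmetric]) measurable
      also have "\<dots> \<le> (\<integral>\<^sup>+\<eta>. ennreal kC * (ennreal (F1 (\<xi> - \<eta>) * G1 \<eta>) + ennreal (F2 (\<xi> - \<eta>) * G2 \<eta>) + ennreal (F3 (\<xi> - \<eta>) * G3 \<eta>)) \<partial>lborel)"
      proof (rule nn_integral_mono)
        fix \<eta>
        have "m \<xi> powr (s - 1) * cmod kap * norm (h \<eta>) = cmod kap * (m \<xi> powr (s - 1) * norm (h \<eta>))" by simp
        also have "\<dots> \<le> cmod kap * (C * (F1 (\<xi> - \<eta>) * G1 \<eta> + F2 (\<xi> - \<eta>) * G2 \<eta> + F3 (\<xi> - \<eta>) * G3 \<eta>))"
          unfolding h_def by (intro mult_left_mono ptb) auto
        finally have le: "m \<xi> powr (s - 1) * cmod kap * norm (h \<eta>) \<le> kC * (F1 (\<xi> - \<eta>) * G1 \<eta> + F2 (\<xi> - \<eta>) * G2 \<eta> + F3 (\<xi> - \<eta>) * G3 \<eta>)"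
          by (simp add: kC_def mult.assoc)
        have "ennreal (m \<xi> powr (s - 1) * cmod kap) * ennreal (norm (h \<eta>)) = ennreal (m \<xi> powr (s - 1) * cmod kap * norm (h \<eta>))"
          by (simp add: ennreal_mult[symmetric])
        also have "\<dots> \<le> ennreal (kC * (F1 (\<xi> - \<eta>) * G1 \<eta> + F2 (\<xi> - \<eta>) * G2 \<eta> + F3 (\<xi> - \<eta>) * G3 \<eta>))"
          using le by (rule ennreal_leI)
        also have "\<dots> = ennreal kC * (ennreal (F1 (\<xi> - \<eta>) * G1 \<eta>) + ennreal (F2 (\<xi> - \<eta>) * G2 \<eta>) + ennreal (F3 (\<xi> - \<eta>) * G3 \<eta>))"
          using kC0 pos by (simp add: ennreal_mult ennreal_plus[symmetric] add_nonneg_nonneg)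
        finally show "ennreal (m \<xi> powr (s - 1) * cmod kap) * ennreal (norm (h \<eta>))
          \<le> ennreal kC * (ennreal (F1 (\<xi> - \<eta>) * G1 \<eta>) + ennreal (F2 (\<xi> - \<eta>) * G2 \<eta>) + ennreal (F3 (\<xi> - \<eta>) * G3 \<eta>))" .
      qed
      also have "\<dots> = ennreal kC * (T1 \<xi> + T2 \<xi> + T3 \<xi>)"
        unfolding T1_def T2_def T3_def
        by (subst nn_integral_cmult, measurable, subst nn_integral_add, measurable, subst nn_integral_add, measurable)
      finally show ?thesis .
    qed
    have stepB: "ennreal ((m \<xi> powr (s - 1) * cmod (Bop a b c p U W \<xi>))\<^sup>2)
        \<le> (ennreal kC)\<^sup>2 * (3 * ((T1 \<xi>)\<^sup>2 + (T2 \<xi>)\<^sup>2 + (T3 \<xi>)\<^sup>2))" for \<xi>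
    proof -
      have "ennreal ((m \<xi> powr (s - 1) * cmod (Bop a b c p U W \<xi>))\<^sup>2) = (ennreal (m \<xi> powr (s - 1) * cmod (Bop a b c p U W \<xi>)))\<^sup>2"
        by (simp add: ennreal_power)
      also have "\<dots> \<le> (ennreal kC * (T1 \<xi> + T2 \<xi> + T3 \<xi>))\<^sup>2"
        by (intro power_mono stepA) auto
      also have "\<dots> = (ennreal kC)\<^sup>2 * (T1 \<xi> + T2 \<xi> + T3 \<xi>)\<^sup>2" by (simp add: power_mult_distrib)
      also have "\<dots> \<le> (ennreal kC)\<^sup>2 * (3 * ((T1 \<xi>)\<^sup>2 + (T2 \<xi>)\<^sup>2 + (T3 \<xi>)\<^sup>2))"
        by (intro mult_left_mono ennreal_sq3) auto
      finally show ?thesis .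
    qed
    have "(\<integral>\<^sup>+\<xi>. ennreal ((m \<xi> powr (s - 1) * cmod (Bop a b c p U W \<xi>))\<^sup>2) \<partial>lborel)
        \<le> (\<integral>\<^sup>+\<xi>. (ennreal kC)\<^sup>2 * (3 * ((T1 \<xi>)\<^sup>2 + (T2 \<xi>)\<^sup>2 + (T3 \<xi>)\<^sup>2)) \<partial>lborel)"
      by (intro nn_integral_mono stepB)
    also have "\<dots> = (ennreal kC)\<^sup>2 * (3 * ((\<integral>\<^sup>+\<xi>. (T1 \<xi>)\<^sup>2 \<partial>lborel) + (\<integral>\<^sup>+\<xi>. (T2 \<xi>)\<^sup>2 \<partial>lborel) + (\<integral>\<^sup>+\<xi>. (T3 \<xi>)\<^sup>2 \<partial>lborel)))"
      by (subst nn_integral_cmult, measurable, subst nn_integral_cmult, measurable, subst nn_integral_add, measurable, subst nn_integral_add, measurable)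
    finally have tot: "(\<integral>\<^sup>+\<xi>. ennreal ((m \<xi> powr (s - 1) * cmod (Bop a b c p U W \<xi>))\<^sup>2) \<partial>lborel)
        \<le> (ennreal kC)\<^sup>2 * (3 * ((\<integral>\<^sup>+\<xi>. (T1 \<xi>)\<^sup>2 \<partial>lborel) + (\<integral>\<^sup>+\<xi>. (T2 \<xi>)\<^sup>2 \<partial>lborel) + (\<integral>\<^sup>+\<xi>. (T3 \<xi>)\<^sup>2 \<partial>lborel)))" .
    have mpos: "0 < m x" for x by (rule m_pos)
    have comb: "m x powr \<alpha> * (m x powr \<beta> * u) = m x powr (\<alpha> + \<beta>) * u" for x \<alpha> \<beta> u
      by (simp add: powr_add mult.assoc)
    have eF1: "F1 x = m x powr (- (s - 1)) * (m x powr s * cmod (U x))" for x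
      unfolding comb F1_def using mpos[of x] by simp
    have eG2: "G2 x = m x powr (- (s - 1)) * (m x powr (s - 1) * cmod (W x))" for x
      unfolding comb G2_def using mpos[of x] by simp
    have eG3: "G3 x = m x powr (- (s - real p - 3)) * (m x powr (s - 1) * cmod (W x))" for x
    proof -
      have "- (s - real p - 3) + (s - 1) = real (p + 2)" by simp
      then show ?thesis unfolding comb G3_def using powr_realpow[OF mpos[of x], of "p + 2"] by simp
    qed
    have dd1: "0 \<le> dd (s - 1)" and dd3: "0 \<le> dd (s - real p - 3)" using L_dec(2) t1 t3 by auto
    have Y1: "(\<integral>\<^sup>+\<xi>. (T1 \<xi>)\<^sup>2 \<partial>lborel) \<le> ennreal (dd (s - 1) * NU\<^sup>2) * ennreal (NW\<^sup>2)"
    proof -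
      have "(\<integral>\<^sup>+\<xi>. (T1 \<xi>)\<^sup>2 \<partial>lborel) \<le> (\<integral>\<^sup>+x. ennreal (F1 x) \<partial>lborel)\<^sup>2 * (\<integral>\<^sup>+x. ennreal ((G1 x)\<^sup>2) \<partial>lborel)"
        unfolding T1_def by (rule young2) (auto simp: pos)
      also have "\<dots> \<le> ennreal (dd (s - 1) * NU\<^sup>2) * ennreal (NW\<^sup>2)"
      proof (rule mult_mono)
        show "(\<integral>\<^sup>+x. ennreal (F1 x) \<partial>lborel)\<^sup>2 \<le> ennreal (dd (s - 1) * NU\<^sup>2)"
          unfolding NU_def by (rule L1[OF U t1 eF1])
        show "(\<integral>\<^sup>+x. ennreal ((G1 x)\<^sup>2) \<partial>lborel) \<le> ennreal (NW\<^sup>2)"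
          unfolding NW_def G1_def L_hn[OF W] ..
      qed auto
      finally show ?thesis .
    qed
    have Y2: "(\<integral>\<^sup>+\<xi>. (T2 \<xi>)\<^sup>2 \<partial>lborel) \<le> ennreal (dd (s - 1) * NW\<^sup>2) * ennreal (NU\<^sup>2)"
    proof -
      have "(\<integral>\<^sup>+\<xi>. (T2 \<xi>)\<^sup>2 \<partial>lborel) \<le> (\<integral>\<^sup>+x. ennreal (G2 x) \<partial>lborel)\<^sup>2 * (\<integral>\<^sup>+x. ennreal ((F2 x)\<^sup>2) \<partial>lborel)"
        unfolding T2_def by (rule young) (auto simp: pos)
      also have "\<dots> \<le> ennreal (dd (s - 1) * NW\<^sup>2) * ennreal (NU\<^sup>2)"
      proof (rule mult_mono)
        show "(\<integral>\<^sup>+x. ennreal (G2 x) \<partial>lborel)\<^sup>2 \<le> ennreal (dd (s - 1) * NW\<^sup>2)"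
          unfolding NW_def by (rule L1[OF W t1 eG2])
        show "(\<integral>\<^sup>+x. ennreal ((F2 x)\<^sup>2) \<partial>lborel) \<le> ennreal (NU\<^sup>2)"
          unfolding NU_def F2_def L_hn[OF U] ..
      qed auto
      finally show ?thesis .
    qed
    have Y3: "(\<integral>\<^sup>+\<xi>. (T3 \<xi>)\<^sup>2 \<partial>lborel) \<le> ennreal (dd (s - real p - 3) * NW\<^sup>2) * ennreal (NU\<^sup>2)"
    proof -
      have "(\<integral>\<^sup>+\<xi>. (T3 \<xi>)\<^sup>2 \<partial>lborel) \<le> (\<integral>\<^sup>+x. ennreal (G3 x) \<partial>lborel)\<^sup>2 * (\<integral>\<^sup>+x. ennreal ((F3 x)\<^sup>2) \<partial>lborel)"
        unfolding T3_def by (rule young) (auto simp: pos)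
      also have "\<dots> \<le> ennreal (dd (s - real p - 3) * NW\<^sup>2) * ennreal (NU\<^sup>2)"
      proof (rule mult_mono)
        show "(\<integral>\<^sup>+x. ennreal (G3 x) \<partial>lborel)\<^sup>2 \<le> ennreal (dd (s - real p - 3) * NW\<^sup>2)"
          unfolding NW_def by (rule L1[OF W t3 eG3])
        have "(\<integral>\<^sup>+x. ennreal ((F3 x)\<^sup>2) \<partial>lborel) \<le> (\<integral>\<^sup>+x. ennreal ((m x powr s * cmod (U x))\<^sup>2) \<partial>lborel)"
        proof (rule nn_integral_mono)
          fix x
          have "m x powr (s - real p - 2) \<le> m x powr s" using m_ge1[of x] by (intro powr_mono) auto
          then have "F3 x \<le> m x powr s * cmod (U x)" unfolding F3_def by (intro mult_right_mono) auto
          then show "ennreal ((F3 x)\<^sup>2) \<le> ennreal ((m x powr s * cmod (U x))\<^sup>2)"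
            using pos(3)[of x] by (intro ennreal_leI power_mono) auto
        qed
        then show "(\<integral>\<^sup>+x. ennreal ((F3 x)\<^sup>2) \<partial>lborel) \<le> ennreal (NU\<^sup>2)"
          unfolding NU_def L_hn[OF U] .
      qed auto
      finally show ?thesis .
    qed
    have "(\<integral>\<^sup>+\<xi>. (T1 \<xi>)\<^sup>2 \<partial>lborel) + (\<integral>\<^sup>+\<xi>. (T2 \<xi>)\<^sup>2 \<partial>lborel) + (\<integral>\<^sup>+\<xi>. (T3 \<xi>)\<^sup>2 \<partial>lborel)
        \<le> ennreal (dd (s - 1) * NU\<^sup>2) * ennreal (NW\<^sup>2) + ennreal (dd (s - 1) * NW\<^sup>2) * ennreal (NU\<^sup>2)
          + ennreal (dd (s - real p - 3) * NW\<^sup>2) * ennreal (NU\<^sup>2)"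
      by (intro add_mono Y1 Y2 Y3)
    also have "\<dots> = ennreal (dd (s - 1) * NU\<^sup>2 * NW\<^sup>2) + ennreal (dd (s - 1) * NW\<^sup>2 * NU\<^sup>2)
          + ennreal (dd (s - real p - 3) * NW\<^sup>2 * NU\<^sup>2)"
      using dd1 dd3 by (simp only: ennreal_mult[symmetric] zero_le_power2 mult_nonneg_nonneg)
    also have "\<dots> = ennreal (dd (s - 1) * NU\<^sup>2 * NW\<^sup>2 + dd (s - 1) * NW\<^sup>2 * NU\<^sup>2 + dd (s - real p - 3) * NW\<^sup>2 * NU\<^sup>2)"
      using dd1 dd3 by (simp only: ennreal_plus[symmetric] zero_le_power2 mult_nonneg_nonneg add_nonneg_nonneg)
    also have "dd (s - 1) * NU\<^sup>2 * NW\<^sup>2 + dd (s - 1) * NW\<^sup>2 * NU\<^sup>2 + dd (s - real p - 3) * NW\<^sup>2 * NU\<^sup>2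
        = (2 * dd (s - 1) + dd (s - real p - 3)) * NU\<^sup>2 * NW\<^sup>2"
      by (simp add: algebra_simps)
    finally have S: "(\<integral>\<^sup>+\<xi>. (T1 \<xi>)\<^sup>2 \<partial>lborel) + (\<integral>\<^sup>+\<xi>. (T2 \<xi>)\<^sup>2 \<partial>lborel) + (\<integral>\<^sup>+\<xi>. (T3 \<xi>)\<^sup>2 \<partial>lborel)
        \<le> ennreal ((2 * dd (s - 1) + dd (s - real p - 3)) * NU\<^sup>2 * NW\<^sup>2)" .
    have "(ennreal kC)\<^sup>2 * (3 * ((\<integral>\<^sup>+\<xi>. (T1 \<xi>)\<^sup>2 \<partial>lborel) + (\<integral>\<^sup>+\<xi>. (T2 \<xi>)\<^sup>2 \<partial>lborel) + (\<integral>\<^sup>+\<xi>. (T3 \<xi>)\<^sup>2 \<partial>lborel)))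
        \<le> (ennreal kC)\<^sup>2 * (3 * ennreal ((2 * dd (s - 1) + dd (s - real p - 3)) * NU\<^sup>2 * NW\<^sup>2))"
      by (intro mult_left_mono S) auto
    also have "\<dots> = ennreal (kC\<^sup>2) * (ennreal 3 * ennreal ((2 * dd (s - 1) + dd (s - real p - 3)) * NU\<^sup>2 * NW\<^sup>2))"
      using kC0 by (simp add: ennreal_power)
    also have "\<dots> = ennreal (kC\<^sup>2 * (3 * ((2 * dd (s - 1) + dd (s - real p - 3)) * NU\<^sup>2 * NW\<^sup>2)))"
      using dd1 dd3 by (simp only: ennreal_mult[symmetric] zero_le_power2 mult_nonneg_nonneg add_nonneg_nonneg zero_le_numeral)
    also have "kC\<^sup>2 * (3 * ((2 * dd (s - 1) + dd (s - real p - 3)) * NU\<^sup>2 * NW\<^sup>2)) = C0 * NU\<^sup>2 * NW\<^sup>2"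
      by (simp add: C0_def algebra_simps)
    finally have fin: "(ennreal kC)\<^sup>2 * (3 * ((\<integral>\<^sup>+\<xi>. (T1 \<xi>)\<^sup>2 \<partial>lborel) + (\<integral>\<^sup>+\<xi>. (T2 \<xi>)\<^sup>2 \<partial>lborel) + (\<integral>\<^sup>+\<xi>. (T3 \<xi>)\<^sup>2 \<partial>lborel)))
        \<le> ennreal (C0 * NU\<^sup>2 * NW\<^sup>2)" .
    show ?thesis using order_trans[OF tot fin] unfolding NU_def NW_def .
  qed
  then show ?thesis using C00 by blast
qed

end


context setting begin

lemma Hs_add:
  assumes U: "U \<in> Hs c p \<sigma>" and V: "V \<in> Hs c p \<sigma>"
  shows "(\<lambda>\<xi>. U \<xi> + V \<xi>) \<in> Hs c p \<sigma>" and "(\<lambda>\<xi>. U \<xi> - V \<xi>) \<in> Hs c p \<sigma>"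
proof -
  have [measurable]: "U \<in> borel_measurable borel" "V \<in> borel_measurable borel" using Hs_meas U V by auto
  have iU: "integrable lborel (\<lambda>\<xi>. (m \<xi> powr \<sigma> * cmod (U \<xi>))\<^sup>2)" using Hs_int[OF U] .
  have iV: "integrable lborel (\<lambda>\<xi>. (m \<xi> powr \<sigma> * cmod (V \<xi>))\<^sup>2)" using Hs_int[OF V] .
  have maj: "integrable lborel (\<lambda>\<xi>. 2 * (m \<xi> powr \<sigma> * cmod (U \<xi>))\<^sup>2 + 2 * (m \<xi> powr \<sigma> * cmod (V \<xi>))\<^sup>2)"
    using iU iV by auto
  have bnd: "(m \<xi> powr \<sigma> * cmod W)\<^sup>2 \<le> 2 * (m \<xi> powr \<sigma> * cmod (U \<xi>))\<^sup>2 + 2 * (m \<xi> powr \<sigma> * cmod (V \<xi>))\<^sup>2"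
    if "cmod W \<le> cmod (U \<xi>) + cmod (V \<xi>)" for W \<xi>
  proof -
    define x where "x = m \<xi> powr \<sigma>"
    have x0: "0 \<le> x" by (simp add: x_def)
    have "(x * cmod W)\<^sup>2 \<le> (x * cmod (U \<xi>) + x * cmod (V \<xi>))\<^sup>2"
      using that x0 by (intro power_mono) (auto simp: distrib_left[symmetric] intro: mult_left_mono)
    also have "\<dots> \<le> 2 * (x * cmod (U \<xi>))\<^sup>2 + 2 * (x * cmod (V \<xi>))\<^sup>2"
      using sum_squares_bound[of "x * cmod (U \<xi>)" "x * cmod (V \<xi>)"] by (simp add: power2_sum)
    finally show ?thesis by (simp add: x_def)
  qed
  show "(\<lambda>\<xi>. U \<xi> + V \<xi>) \<in> Hs c p \<sigma>"
    unfolding Hs_def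
  proof (intro CollectI conjI allI)
    show "(\<lambda>\<xi>. U \<xi> + V \<xi>) \<in> borel_measurable lborel" by measurable
    show "integrable lborel (\<lambda>\<xi>. (m \<xi> powr \<sigma> * cmod (U \<xi> + V \<xi>))\<^sup>2)"
      by (rule Bochner_Integration.integrable_bound[OF maj]) (auto intro!: bnd norm_triangle_ineq)
    show "U (- \<xi>) + V (- \<xi>) = cnj (U \<xi> + V \<xi>)" for \<xi> using Hs_herm U V by simp
  qed
  show "(\<lambda>\<xi>. U \<xi> - V \<xi>) \<in> Hs c p \<sigma>"
    unfolding Hs_def
  proof (intro CollectI conjI allI)
    show "(\<lambda>\<xi>. U \<xi> - V \<xi>) \<in> borel_measurable lborel" by measurable
    show "integrable lborel (\<lambda>\<xi>. (m \<xi> powr \<sigma> * cmod (U \<xi> - V \<xi>))\<^sup>2)"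
      by (rule Bochner_Integration.integrable_bound[OF maj]) (auto intro!: bnd norm_triangle_ineq4)
    show "U (- \<xi>) - V (- \<xi>) = cnj (U \<xi> - V \<xi>)" for \<xi> using Hs_herm U V by simp
  qed
qed

lemma Hs_scale:
  assumes U: "U \<in> Hs c p \<sigma>"
  shows "(\<lambda>\<xi>. complex_of_real t * U \<xi>) \<in> Hs c p \<sigma>"
proof -
  have [measurable]: "U \<in> borel_measurable borel" using Hs_meas U by auto
  show ?thesis unfolding Hs_def
  proof (intro CollectI conjI allI)
    show "(\<lambda>\<xi>. complex_of_real t * U \<xi>) \<in> borel_measurable lborel" by measurable
    have "integrable lborel (\<lambda>\<xi>. t\<^sup>2 * (m \<xi> powr \<sigma> * cmod (U \<xi>))\<^sup>2)" using Hs_int[OF U] by auto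
    then show "integrable lborel (\<lambda>\<xi>. (m \<xi> powr \<sigma> * cmod (complex_of_real t * U \<xi>))\<^sup>2)"
      by (simp add: norm_mult power_mult_distrib ac_simps)
    show "complex_of_real t * U (- \<xi>) = cnj (complex_of_real t * U \<xi>)" for \<xi> using Hs_herm U by simp
  qed
qed

end


context setting2 begin

lemma Bop_eq: "U \<in> Hs c p s \<Longrightarrow> W \<in> Hs c p (s - 1) \<Longrightarrow>
  Bop a b c p U W = (\<lambda>\<xi>. kap * (LINT \<eta>|lborel. U (\<xi> - \<eta>) * W \<eta> * kern \<xi> \<eta>))"
  by (rule ext) (rule Bop_formula(2))

lemma Bop_meas:
  assumes U: "U \<in> Hs c p s" and W: "W \<in> Hs c p (s - 1)"
  shows "Bop a b c p U W \<in> borel_measurable borel"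
proof -
  have [measurable]: "U \<in> borel_measurable borel" "W \<in> borel_measurable borel" using Hs_meas U W by auto
  show ?thesis unfolding Bop_eq[OF U W] kern_def by measurable
qed

lemma kern_minus: "kern (- \<xi>) (- \<eta>) = cnj (kern \<xi> \<eta>)"
  by (simp add: kern_def PP_minus m_minus)

lemma Bop_herm:
  assumes U: "U \<in> Hs c p s" and W: "W \<in> Hs c p (s - 1)"
  shows "Bop a b c p U W (- \<xi>) = cnj (Bop a b c p U W \<xi>)"
proof -
  have "(LINT \<eta>|lborel. U (- \<xi> - \<eta>) * W \<eta> * kern (- \<xi>) \<eta>)
      = (LINT \<eta>|lborel. U (- \<xi> - (0 + (-1) * \<eta>)) * W (0 + (-1) * \<eta>) * kern (- \<xi>) (0 + (-1) * \<eta>))"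
    using lborel_integral_real_affine[of "-1" "\<lambda>\<eta>. U (- \<xi> - \<eta>) * W \<eta> * kern (- \<xi>) \<eta>" 0] by simp
  also have "\<dots> = (LINT \<eta>|lborel. cnj (U (\<xi> - \<eta>) * W \<eta> * kern \<xi> \<eta>))"
  proof (rule Bochner_Integration.integral_cong)
    fix \<eta>
    have "U (- \<xi> - (0 + (-1) * \<eta>)) = cnj (U (\<xi> - \<eta>))" using Hs_herm[OF U, of "\<xi> - \<eta>"] by simp
    moreover have "W (0 + (-1) * \<eta>) = cnj (W \<eta>)" using Hs_herm[OF W, of \<eta>] by simp
    moreover have "kern (- \<xi>) (0 + (-1) * \<eta>) = cnj (kern \<xi> \<eta>)" using kern_minus[of \<xi> \<eta>] by simp
    ultimately show "U (- \<xi> - (0 + (-1) * \<eta>)) * W (0 + (-1) * \<eta>) * kern (- \<xi>) (0 + (-1) * \<eta>) = cnj (U (\<xi> - \<eta>) * W \<eta> * kern \<xi> \<eta>)"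
      by simp
  qed simp
  also have "\<dots> = cnj (LINT \<eta>|lborel. U (\<xi> - \<eta>) * W \<eta> * kern \<xi> \<eta>)" by (rule Bochner_Integration.integral_cnj)
  finally show ?thesis unfolding Bop_formula(2)[OF U W] by (simp add: kap_def)
qed

lemma Bop_bound:
  "\<exists>C\<ge>0. \<forall>U\<in>Hs c p s. \<forall>W\<in>Hs c p (s - 1).
     Bop a b c p U W \<in> Hs c p (s - 1) \<and> hnorm c p (s - 1) (Bop a b c p U W) \<le> C * hnorm c p s U * hnorm c p (s - 1) W"
proof -
  obtain C0 where C0: "C0 \<ge> 0" and est: "\<And>U W. U \<in> Hs c p s \<Longrightarrow> W \<in> Hs c p (s - 1) \<Longrightarrow>
     (\<integral>\<^sup>+\<xi>. ennreal ((m \<xi> powr (s - 1) * cmod (Bop a b c p U W \<xi>))\<^sup>2) \<partial>lborel)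
       \<le> ennreal (C0 * (hnorm c p s U)\<^sup>2 * (hnorm c p (s - 1) W)\<^sup>2)"
    using Bop_est by blast
  have "Bop a b c p U W \<in> Hs c p (s - 1) \<and> hnorm c p (s - 1) (Bop a b c p U W) \<le> sqrt C0 * hnorm c p s U * hnorm c p (s - 1) W"
    if U: "U \<in> Hs c p s" and W: "W \<in> Hs c p (s - 1)" for U W
  proof -
    have [measurable]: "Bop a b c p U W \<in> borel_measurable borel" using Bop_meas[OF U W] .
    define X where "X = C0 * (hnorm c p s U)\<^sup>2 * (hnorm c p (s - 1) W)\<^sup>2"
    have X0: "0 \<le> X" using C0 by (simp add: X_def)
    have e: "(\<integral>\<^sup>+\<xi>. ennreal ((m \<xi> powr (s - 1) * cmod (Bop a b c p U W \<xi>))\<^sup>2) \<partial>lborel) \<le> ennreal X"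
      using est[OF U W] by (simp add: X_def)
    have int: "integrable lborel (\<lambda>\<xi>. (m \<xi> powr (s - 1) * cmod (Bop a b c p U W \<xi>))\<^sup>2)"
    proof -
      have fin: "(\<integral>\<^sup>+\<xi>. ennreal ((m \<xi> powr (s - 1) * cmod (Bop a b c p U W \<xi>))\<^sup>2) \<partial>lborel) < \<infinity>"
        using e by (rule le_less_trans) simp
      show ?thesis by (rule integrableI_nonneg) (use fin in auto)
    qed
    have "ennreal (LINT \<xi>|lborel. (m \<xi> powr (s - 1) * cmod (Bop a b c p U W \<xi>))\<^sup>2) \<le> ennreal X"
      using e by (subst nn_integral_eq_integral[OF int, symmetric]) auto
    then have le: "(LINT \<xi>|lborel. (m \<xi> powr (s - 1) * cmod (Bop a b c p U W \<xi>))\<^sup>2) \<le> X"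
      using X0 by (simp add: ennreal_le_iff)
    have "hnorm c p (s - 1) (Bop a b c p U W) \<le> sqrt X"
      unfolding hnorm_def using le by simp
    also have "sqrt X = sqrt C0 * hnorm c p s U * hnorm c p (s - 1) W"
      unfolding X_def by (simp add: real_sqrt_mult hnorm_def)
    finally have hb: "hnorm c p (s - 1) (Bop a b c p U W) \<le> sqrt C0 * hnorm c p s U * hnorm c p (s - 1) W" .
    have "Bop a b c p U W \<in> Hs c p (s - 1)"
      unfolding Hs_def using int Bop_herm[OF U W] by auto
    then show ?thesis using hb by blast
  qed
  then show ?thesis using C0 by (intro exI[of _ "sqrt C0"]) auto
qed

end


context setting2 begin

lemma Bop_add_W:
  assumes U: "U \<in> Hs c p s" and W1: "W1 \<in> Hs c p (s - 1)" and W2: "W2 \<in> Hs c p (s - 1)"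
  shows "Bop a b c p U (\<lambda>\<xi>. W1 \<xi> + W2 \<xi>) = (\<lambda>\<xi>. Bop a b c p U W1 \<xi> + Bop a b c p U W2 \<xi>)"
proof (rule ext)
  fix \<xi>
  have W12: "(\<lambda>\<xi>. W1 \<xi> + W2 \<xi>) \<in> Hs c p (s - 1)" by (rule Hs_add(1)[OF W1 W2])
  have i1: "integrable lborel (\<lambda>\<eta>. U (\<xi> - \<eta>) * W1 \<eta> * kern \<xi> \<eta>)" by (rule Bop_formula(1)[OF U W1])
  have i2: "integrable lborel (\<lambda>\<eta>. U (\<xi> - \<eta>) * W2 \<eta> * kern \<xi> \<eta>)" by (rule Bop_formula(1)[OF U W2])
  have "(LINT \<eta>|lborel. U (\<xi> - \<eta>) * (W1 \<eta> + W2 \<eta>) * kern \<xi> \<eta>)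
      = (LINT \<eta>|lborel. U (\<xi> - \<eta>) * W1 \<eta> * kern \<xi> \<eta> + U (\<xi> - \<eta>) * W2 \<eta> * kern \<xi> \<eta>)"
    by (simp add: algebra_simps)
  also have "\<dots> = (LINT \<eta>|lborel. U (\<xi> - \<eta>) * W1 \<eta> * kern \<xi> \<eta>) + (LINT \<eta>|lborel. U (\<xi> - \<eta>) * W2 \<eta> * kern \<xi> \<eta>)"
    by (rule Bochner_Integration.integral_add[OF i1 i2])
  finally show "Bop a b c p U (\<lambda>\<xi>. W1 \<xi> + W2 \<xi>) \<xi> = Bop a b c p U W1 \<xi> + Bop a b c p U W2 \<xi>"
    unfolding Bop_formula(2)[OF U W12] Bop_formula(2)[OF U W1] Bop_formula(2)[OF U W2]
    by (simp add: algebra_simps)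
qed

lemma Bop_scale_W:
  assumes U: "U \<in> Hs c p s" and W: "W \<in> Hs c p (s - 1)"
  shows "Bop a b c p U (\<lambda>\<xi>. complex_of_real t * W \<xi>) = (\<lambda>\<xi>. complex_of_real t * Bop a b c p U W \<xi>)"
proof (rule ext)
  fix \<xi>
  have Wt: "(\<lambda>\<xi>. complex_of_real t * W \<xi>) \<in> Hs c p (s - 1)" by (rule Hs_scale[OF W])
  have "(LINT \<eta>|lborel. U (\<xi> - \<eta>) * (complex_of_real t * W \<eta>) * kern \<xi> \<eta>)
      = (LINT \<eta>|lborel. complex_of_real t * (U (\<xi> - \<eta>) * W \<eta> * kern \<xi> \<eta>))"
    by (simp add: algebra_simps)
  also have "\<dots> = complex_of_real t * (LINT \<eta>|lborel. U (\<xi> - \<eta>) * W \<eta> * kern \<xi> \<eta>)"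
    by (rule Bochner_Integration.integral_mult_right_zero)
  finally show "Bop a b c p U (\<lambda>\<xi>. complex_of_real t * W \<xi>) \<xi> = complex_of_real t * Bop a b c p U W \<xi>"
    unfolding Bop_formula(2)[OF U Wt] Bop_formula(2)[OF U W]
    by (simp add: algebra_simps)
qed

lemma Bop_sub_U:
  assumes U: "U \<in> Hs c p s" and V: "V \<in> Hs c p s" and W: "W \<in> Hs c p (s - 1)"
  shows "(\<lambda>\<xi>. Bop a b c p U W \<xi> - Bop a b c p V W \<xi>) = Bop a b c p (\<lambda>\<xi>. U \<xi> - V \<xi>) W"
proof (rule ext)
  fix \<xi>
  have UV: "(\<lambda>\<xi>. U \<xi> - V \<xi>) \<in> Hs c p s" by (rule Hs_add(2)[OF U V])
  have i1: "integrable lborel (\<lambda>\<eta>. U (\<xi> - \<eta>) * W \<eta> * kern \<xi> \<eta>)" by (rule Bop_formula(1)[OF U W])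
  have i2: "integrable lborel (\<lambda>\<eta>. V (\<xi> - \<eta>) * W \<eta> * kern \<xi> \<eta>)" by (rule Bop_formula(1)[OF V W])
  have "(LINT \<eta>|lborel. (U (\<xi> - \<eta>) - V (\<xi> - \<eta>)) * W \<eta> * kern \<xi> \<eta>)
      = (LINT \<eta>|lborel. U (\<xi> - \<eta>) * W \<eta> * kern \<xi> \<eta> - V (\<xi> - \<eta>) * W \<eta> * kern \<xi> \<eta>)"
    by (simp add: algebra_simps)
  also have "\<dots> = (LINT \<eta>|lborel. U (\<xi> - \<eta>) * W \<eta> * kern \<xi> \<eta>) - (LINT \<eta>|lborel. V (\<xi> - \<eta>) * W \<eta> * kern \<xi> \<eta>)"
    by (rule Bochner_Integration.integral_diff[OF i1 i2])
  finally have e: "(LINT \<eta>|lborel. (U (\<xi> - \<eta>) - V (\<xi> - \<eta>)) * W \<eta> * kern \<xi> \<eta>)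
      = (LINT \<eta>|lborel. U (\<xi> - \<eta>) * W \<eta> * kern \<xi> \<eta>) - (LINT \<eta>|lborel. V (\<xi> - \<eta>) * W \<eta> * kern \<xi> \<eta>)" .
  show "Bop a b c p U W \<xi> - Bop a b c p V W \<xi> = Bop a b c p (\<lambda>\<xi>. U \<xi> - V \<xi>) W \<xi>"
    unfolding Bop_formula(2)[OF UV W] Bop_formula(2)[OF U W] Bop_formula(2)[OF V W] e
    by (rule right_diff_distrib[symmetric])
qed

end

theorem lemma2p8:
  fixes a b s :: real and p :: nat and c :: "nat \<Rightarrow> real"
  assumes "a > 0" and "b > 0"
    and "even p" and "c p \<noteq> 0"
    and "\<forall>\<xi>. Lsym c p \<xi> \<in> \<real> \<and> 0 \<le> Re (Lsym c p \<xi>)"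
    and "s > 7/2 + real p"
  shows "(\<forall>U \<in> Hs c p s.
            (\<forall>W \<in> Hs c p (s - 1). Bop a b c p U W \<in> Hs c p (s - 1))
          \<and> (\<forall>W1 \<in> Hs c p (s - 1). \<forall>W2 \<in> Hs c p (s - 1).
               Bop a b c p U (\<lambda>\<xi>. W1 \<xi> + W2 \<xi>) = (\<lambda>\<xi>. Bop a b c p U W1 \<xi> + Bop a b c p U W2 \<xi>))
          \<and> (\<forall>t::real. \<forall>W \<in> Hs c p (s - 1).
               Bop a b c p U (\<lambda>\<xi>. complex_of_real t * W \<xi>) = (\<lambda>\<xi>. complex_of_real t * Bop a b c p U W \<xi>))
          \<and> (\<exists>C. \<forall>W \<in> Hs c p (s - 1). hnorm c p (s - 1) (Bop a b c p U W) \<le> C * hnorm c p (s - 1) W))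
    \<and> (\<forall>r > 0. \<exists>C. \<forall>U \<in> Hs c p s. hnorm c p s U \<le> r \<longrightarrow>
          (\<forall>W \<in> Hs c p (s - 1). hnorm c p (s - 1) (Bop a b c p U W) \<le> C * hnorm c p (s - 1) W))
    \<and> (\<forall>r > 0. \<exists>lam2. \<forall>U \<in> Hs c p s. \<forall>V \<in> Hs c p s.
          hnorm c p s U \<le> r \<longrightarrow> hnorm c p s V \<le> r \<longrightarrow>
          (\<forall>W \<in> Hs c p (s - 1).
             hnorm c p (s - 1) (\<lambda>\<xi>. Bop a b c p U W \<xi> - Bop a b c p V W \<xi>)
               \<le> lam2 * hnorm c p s (\<lambda>\<xi>. U \<xi> - V \<xi>) * hnorm c p (s - 1) W))"
proof -
  interpret S: setting2 c p a b s
    by unfold_locales (use assms in auto)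
  obtain C where C: "C \<ge> 0" and CB: "\<And>U W. U \<in> Hs c p s \<Longrightarrow> W \<in> Hs c p (s - 1) \<Longrightarrow>
     Bop a b c p U W \<in> Hs c p (s - 1) \<and> hnorm c p (s - 1) (Bop a b c p U W) \<le> C * hnorm c p s U * hnorm c p (s - 1) W"
    using S.Bop_bound by blast
  have hn0: "0 \<le> hnorm c p \<sigma> X" for \<sigma> X by (simp add: hnorm_def)
  have P1: "\<forall>U \<in> Hs c p s.
            (\<forall>W \<in> Hs c p (s - 1). Bop a b c p U W \<in> Hs c p (s - 1))
          \<and> (\<forall>W1 \<in> Hs c p (s - 1). \<forall>W2 \<in> Hs c p (s - 1).
               Bop a b c p U (\<lambda>\<xi>. W1 \<xi> + W2 \<xi>) = (\<lambda>\<xi>. Bop a b c p U W1 \<xi> + Bop a b c p U W2 \<xi>))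
          \<and> (\<forall>t::real. \<forall>W \<in> Hs c p (s - 1).
               Bop a b c p U (\<lambda>\<xi>. complex_of_real t * W \<xi>) = (\<lambda>\<xi>. complex_of_real t * Bop a b c p U W \<xi>))
          \<and> (\<exists>C. \<forall>W \<in> Hs c p (s - 1). hnorm c p (s - 1) (Bop a b c p U W) \<le> C * hnorm c p (s - 1) W)"
  proof (intro ballI conjI allI)
    fix U assume U: "U \<in> Hs c p s"
    show "Bop a b c p U W \<in> Hs c p (s - 1)" if "W \<in> Hs c p (s - 1)" for W using CB[OF U that] by blast
    show "Bop a b c p U (\<lambda>\<xi>. W1 \<xi> + W2 \<xi>) = (\<lambda>\<xi>. Bop a b c p U W1 \<xi> + Bop a b c p U W2 \<xi>)"
      if "W1 \<in> Hs c p (s - 1)" "W2 \<in> Hs c p (s - 1)" for W1 W2 using S.Bop_add_W[OF U that] .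
    show "Bop a b c p U (\<lambda>\<xi>. complex_of_real t * W \<xi>) = (\<lambda>\<xi>. complex_of_real t * Bop a b c p U W \<xi>)"
      if "W \<in> Hs c p (s - 1)" for t W using S.Bop_scale_W[OF U that] .
    show "\<exists>C'. \<forall>W \<in> Hs c p (s - 1). hnorm c p (s - 1) (Bop a b c p U W) \<le> C' * hnorm c p (s - 1) W"
      using CB[OF U] by (intro exI[of _ "C * hnorm c p s U"]) auto
  qed
  have P2: "\<forall>r > 0. \<exists>C'. \<forall>U \<in> Hs c p s. hnorm c p s U \<le> r \<longrightarrow>
          (\<forall>W \<in> Hs c p (s - 1). hnorm c p (s - 1) (Bop a b c p U W) \<le> C' * hnorm c p (s - 1) W)"
  proof (intro allI impI exI[of _ "C * _"] ballI)
    fix r :: real and U W assume r: "r > 0" and U: "U \<in> Hs c p s" and Ur: "hnorm c p s U \<le> r" and W: "W \<in> Hs c p (s - 1)"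
    have "hnorm c p (s - 1) (Bop a b c p U W) \<le> C * hnorm c p s U * hnorm c p (s - 1) W" using CB[OF U W] by blast
    also have "\<dots> \<le> C * r * hnorm c p (s - 1) W" using C Ur hn0 by (intro mult_right_mono mult_left_mono) auto
    finally show "hnorm c p (s - 1) (Bop a b c p U W) \<le> C * r * hnorm c p (s - 1) W" .
  qed
  have P3: "\<forall>r > 0. \<exists>lam2. \<forall>U \<in> Hs c p s. \<forall>V \<in> Hs c p s.
          hnorm c p s U \<le> r \<longrightarrow> hnorm c p s V \<le> r \<longrightarrow>
          (\<forall>W \<in> Hs c p (s - 1).
             hnorm c p (s - 1) (\<lambda>\<xi>. Bop a b c p U W \<xi> - Bop a b c p V W \<xi>)
               \<le> lam2 * hnorm c p s (\<lambda>\<xi>. U \<xi> - V \<xi>) * hnorm c p (s - 1) W)"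
  proof (intro allI impI exI[of _ C] ballI)
    fix U V W assume U: "U \<in> Hs c p s" and V: "V \<in> Hs c p s" and W: "W \<in> Hs c p (s - 1)"
    have UV: "(\<lambda>\<xi>. U \<xi> - V \<xi>) \<in> Hs c p s" by (rule S.Hs_add(2)[OF U V])
    show "hnorm c p (s - 1) (\<lambda>\<xi>. Bop a b c p U W \<xi> - Bop a b c p V W \<xi>) \<le> C * hnorm c p s (\<lambda>\<xi>. U \<xi> - V \<xi>) * hnorm c p (s - 1) W"
      unfolding S.Bop_sub_U[OF U V W] using CB[OF UV W] by blast
  qed
  show ?thesis using P1 P2 P3 by blast
qed


end
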